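(* Let $m\ge1$ and let $a$ be an integer with $\gcd(a,m)=1$. Then $$\operatorname{CC}(\operatorname{Hol}_a(\mathbb{Z}/m\mathbb{Z}))=\mathop{\divideontimes}_{p\mid m}\Gamma_{p^{\nu_p(m)}}\big(\operatorname{o}_{p^{\nu_p(m)}}(a)\big),$$ where the $\divideontimes$-product ranges over the primes $p$ dividing $m$ (the empty $\divideontimes$-product being $x_1$), $\operatorname{Hol}_a(\mathbb{Z}/m\mathbb{Z})=\{x\mapsto ax+b: b\in\mathbb{Z}/m\mathbb{Z}\}$, and $\Gamma_{p^k}(o)$ denotes the cycle counter of $\operatorname{Hol}_{a'}(\mathbb{Z}/p^k\mathbb{Z})$ for any $a'$ with $\operatorname{o}_{p^k}(a')=o$ (which depends only on $o$).
   Context: $\operatorname{CC}(X)=\sum_{g\in X}\operatorname{CT}(g)$, where $\operatorname{CT}(g)=x_1^{k_1}x_2^{k_2}\cdots$ with $k_i$ the number of $i$-cycles of $g$. For $p\nmid a$: if $p>2$, $\operatorname{o}_{p^k}(a)$ is the multiplicative order of $a$ mod $p^k$; if $p=2$, $k\le1$, $\operatorname{o}_{2^k}(a)=(0,1)$; if $p=2$, $k\ge2$, writing $a\equiv(-1)^\epsilon a'\pmod{2^k}$ with $\epsilon\in\{0,1\}$ and $a'$ a power of $5$, $\operatorname{o}_{2^k}(a)=(\epsilon,\operatorname{ord}_{2^k}(a'))$. The $\divideontimes$-product on $\mathbb{Q}[x_1,x_2,\dots]$ is the bilinear product determined on monomials by $x_i^e\divideontimes x_j^f=x_{\operatorname{lcm}(i,j)}^{ef\gcd(i,j)}$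 and $\big(\prod_i x_i^{e_i}\big)\divideontimes\big(\prod_jx_j^{f_j}\big)=\prod_{i,j}(x_i^{e_i}\divideontimes x_j^{f_j})$ (ordinary product on the right); it is commutative and associative. *)

theory Defs
  imports "HOL-Number_Theory.Number_Theory" "HOL-Library.Poly_Mapping"
begin

text \<open>Polynomials in Q[x_1,x_2,...]: a monomial x_1^k_1 x_2^k_2 ... is its
  exponent vector (finitely supported nat to nat); a polynomial is a finitely
  supported map from monomials to rational coefficients.\<close>

type_synonym mono = "nat \<Rightarrow>\<^sub>0 nat"
type_synonym cpoly = "mono \<Rightarrow>\<^sub>0 rat"

definition monomial_poly :: "mono \<Rightarrow> cpoly" where
  "monomial_poly \<alpha> = Poly_Mapping.single \<alpha> 1"

definition x1 :: cpoly where
  "x1 = monomial_poly (Poly_Mapping.single 1 1)"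

definition orbit_of :: "('a \<Rightarrow> 'a) \<Rightarrow> 'a \<Rightarrow> 'a set" where
  "orbit_of g x = {(g ^^ n) x | n. True}"

definition cycles_on :: "('a \<Rightarrow> 'a) \<Rightarrow> 'a set \<Rightarrow> 'a set set" where
  "cycles_on g S = orbit_of g ` S"

definition num_cycles :: "('a \<Rightarrow> 'a) \<Rightarrow> 'a set \<Rightarrow> nat \<Rightarrow> nat" where
  "num_cycles g S i = card {c \<in> cycles_on g S. card c = i}"

definition CT :: "('a \<Rightarrow> 'a) \<Rightarrow> 'a set \<Rightarrow> cpoly" where
  "CT g S = monomial_poly (Abs_poly_mapping (num_cycles g S))"

definition CC :: "('a \<Rightarrow> 'a) set \<Rightarrow> 'a set \<Rightarrow> cpoly" where
  "CC X S = (\<Sum>g\<in>X. CT g S)"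

text \<open>Z/mZ is represented by {0..<m} \<subseteq> int;
  Hol_a(Z/mZ) = {x \<mapsto> a x + b : b \<in> Z/mZ}.\<close>
definition Zmod :: "nat \<Rightarrow> int set" where
  "Zmod m = {0..<int m}"

definition Hol :: "int \<Rightarrow> nat \<Rightarrow> (int \<Rightarrow> int) set" where
  "Hol a m = {(\<lambda>x. (a * x + b) mod int m) | b. b \<in> Zmod m}"

definition CC_Hol :: "int \<Rightarrow> nat \<Rightarrow> cpoly" where
  "CC_Hol a m = CC (Hol a m) (Zmod m)"

definition star_mono :: "mono \<Rightarrow> mono \<Rightarrow> mono" where
  "star_mono \<alpha> \<beta> =
     (\<Sum>i\<in>Poly_Mapping.keys \<alpha>. \<Sum>j\<in>Poly_Mapping.keys \<beta>.
        Poly_Mapping.single (lcm i j) (Poly_Mapping.lookup \<alpha> i * Poly_Mapping.lookup \<beta> j * gcd i j))"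

definition star :: "cpoly \<Rightarrow> cpoly \<Rightarrow> cpoly" where
  "star P Q =
     (\<Sum>\<alpha>\<in>Poly_Mapping.keys P. \<Sum>\<beta>\<in>Poly_Mapping.keys Q.
        Poly_Mapping.single (star_mono \<alpha> \<beta>) (Poly_Mapping.lookup P \<alpha> * Poly_Mapping.lookup Q \<beta>))"

definition star_prod :: "(nat \<Rightarrow> cpoly) \<Rightarrow> nat set \<Rightarrow> cpoly" where
  "star_prod f A = foldr (\<lambda>p acc. star (f p) acc) (sorted_list_of_set A) x1"

text \<open>The invariant o_{p^k}(a) (for p not dividing a). Encoded uniformly as a pair:
  for odd p it is (0, multiplicative order of a mod p^k).\<close>
definition ord_int :: "nat \<Rightarrow> int \<Rightarrow> nat" where
  "ord_int n a = ord n (nat (a mod int n))"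

definition oinv :: "nat \<Rightarrow> nat \<Rightarrow> int \<Rightarrow> nat \<times> nat" where
  "oinv p k a =
    (if p > 2 then (0, ord_int (p ^ k) a)
     else if k \<le> 1 then (0, 1)
     else (SOME (e, d). e \<in> {0, 1} \<and>
             (\<exists>j::nat. [a = (-1) ^ e * 5 ^ j] (mod int (2 ^ k)) \<and>
                       d = ord_int (2 ^ k) (5 ^ j))))"

definition Gamma :: "nat \<Rightarrow> nat \<Rightarrow> nat \<times> nat \<Rightarrow> cpoly" where
  "Gamma p k ov = CC_Hol (SOME a'. \<not> int p dvd a' \<and> oinv p k a' = ov) (p ^ k)"

end

theory Submission
  imports Defs
begin


definition per :: "('a \<Rightarrow> 'a) \<Rightarrow> 'a \<Rightarrow> nat" where
  "per g x = (LEAST d. 0 < d \<and> (g ^^ d) x = x)"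

definition periodic :: "('a \<Rightarrow> 'a) \<Rightarrow> 'a \<Rightarrow> bool" where
  "periodic g x \<longleftrightarrow> (\<exists>N>0. (g ^^ N) x = x)"

lemma per_props:
  assumes "periodic g x" shows "0 < per g x" "(g ^^ per g x) x = x"
proof -
  from assms obtain N where "0 < N \<and> (g ^^ N) x = x" unfolding periodic_def by blast
  hence "0 < per g x \<and> (g ^^ per g x) x = x" unfolding per_def by (rule LeastI)
  thus "0 < per g x" "(g ^^ per g x) x = x" by auto
qed

lemma per_least: "0 < d \<Longrightarrow> d < per g x \<Longrightarrow> (g ^^ d) x \<noteq> x"
  unfolding per_def using not_less_Least by blast

lemma per_le: "0 < d \<Longrightarrow> (g ^^ d) x = x \<Longrightarrow> per g x \<le> d"
  unfolding per_def by (rule Least_le) simp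

lemma funpow_mult_per:
  assumes "periodic g x" shows "(g ^^ (per g x * q)) x = x"
proof (induction q)
  case 0 then show ?case by simp
next
  case (Suc q)
  have "(g ^^ (per g x * Suc q)) x = (g ^^ per g x) ((g ^^ (per g x * q)) x)"
    by (simp add: funpow_add)
  also have "\<dots> = x" using Suc per_props[OF assms] by simp
  finally show ?case .
qed

lemma funpow_mod_per:
  assumes "periodic g x" shows "(g ^^ n) x = (g ^^ (n mod per g x)) x"
proof -
  have "n = n mod per g x + per g x * (n div per g x)" by simp
  hence "(g ^^ n) x = (g ^^ (n mod per g x)) ((g ^^ (per g x * (n div per g x))) x)"
    by (metis funpow_add o_apply)
  thus ?thesis using funpow_mult_per[OF assms] by simp
qed

lemma funpow_cong_per:
  assumes "periodic g x" "[i = j] (mod per g x)" shows "(g ^^ i) x = (g ^^ j) x"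
  using assms funpow_mod_per[OF assms(1)] unfolding cong_def by metis

lemma per_dvd_iff:
  assumes "periodic g x" shows "(g ^^ d) x = x \<longleftrightarrow> per g x dvd d"
proof
  assume h: "(g ^^ d) x = x"
  have "(g ^^ (d mod per g x)) x = x" using h funpow_mod_per[OF assms, of d] by simp
  moreover have "d mod per g x < per g x" using per_props(1)[OF assms] by simp
  ultimately have "d mod per g x = 0" using per_least by (metis neq0_conv)
  thus "per g x dvd d" by (simp add: mod_eq_0_iff_dvd)
next
  assume "per g x dvd d"
  then obtain q where "d = per g x * q" by auto
  thus "(g ^^ d) x = x" using funpow_mult_per[OF assms] by simp
qed

lemma orbit_eq:
  assumes "periodic g x" shows "orbit_of g x = (\<lambda>i. (g ^^ i) x) ` {..<per g x}"
proof
  show "orbit_of g x \<subseteq> (\<lambda>i. (g ^^ i) x) ` {..<per g x}"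
  proof
    fix y assume "y \<in> orbit_of g x"
    then obtain n where "y = (g ^^ n) x" unfolding orbit_of_def by auto
    hence "y = (g ^^ (n mod per g x)) x" using funpow_mod_per[OF assms] by simp
    moreover have "n mod per g x < per g x" using per_props(1)[OF assms] by simp
    ultimately show "y \<in> (\<lambda>i. (g ^^ i) x) ` {..<per g x}" by auto
  qed
qed (auto simp: orbit_of_def)

lemma finite_orbit: "periodic g x \<Longrightarrow> finite (orbit_of g x)"
  by (simp add: orbit_eq)

lemma self_in_orbit: "x \<in> orbit_of g x"
  unfolding orbit_of_def by (auto intro: exI[of _ 0])

lemma card_orbit:
  assumes "periodic g x" shows "card (orbit_of g x) = per g x"
proof -
  have "inj_on (\<lambda>i. (g ^^ i) x) {..<per g x}"
  proof (rule inj_onI)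
    have key: "False" if "i < j" "j < per g x" "(g ^^ i) x = (g ^^ j) x" for i j
    proof -
      have "(g ^^ (per g x - j + i)) x = (g ^^ (per g x - j)) ((g ^^ i) x)"
        by (simp add: funpow_add)
      also have "\<dots> = (g ^^ (per g x - j)) ((g ^^ j) x)" using that by simp
      also have "\<dots> = (g ^^ (per g x - j + j)) x" by (simp add: funpow_add)
      also have "\<dots> = x" using that per_props(2)[OF assms] by simp
      finally have e: "(g ^^ (per g x - j + i)) x = x" .
      moreover have "0 < per g x - j + i" "per g x - j + i < per g x" using that by auto
      ultimately show False using per_least[of "per g x - j + i" g x] by argo
    qed
    fix i j assume h: "i \<in> {..<per g x}" "j \<in> {..<per g x}" "(g ^^ i) x = (g ^^ j) x"
    show "i = j"
    proof (rule ccontr)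
      assume "i \<noteq> j"
      hence "i < j \<or> j < i" by linarith
      thus False
      proof
        assume "i < j" thus False using key[of i j] h by simp
      next
        assume "j < i" thus False using key[of j i] h by simp
      qed
    qed
  qed
  thus ?thesis using orbit_eq[OF assms] by (simp add: card_image)
qed

lemma periodic_iter:
  assumes "periodic g x" shows "periodic g ((g ^^ i) x)"
proof -
  have "(g ^^ per g x) ((g ^^ i) x) = (g ^^ (per g x + i)) x" by (simp add: funpow_add)
  also have "\<dots> = (g ^^ (i + per g x)) x" by (simp add: add.commute)
  also have "\<dots> = (g ^^ i) ((g ^^ per g x) x)" by (simp add: funpow_add)
  finally have "(g ^^ per g x) ((g ^^ i) x) = (g ^^ i) ((g ^^ per g x) x)" .
  thus ?thesis using per_props[OF assms] unfolding periodic_def by auto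
qed

lemma orbit_iter:
  assumes "periodic g x" shows "orbit_of g ((g ^^ i) x) = orbit_of g x"
proof
  show "orbit_of g ((g ^^ i) x) \<subseteq> orbit_of g x"
  proof
    fix y assume "y \<in> orbit_of g ((g ^^ i) x)"
    then obtain n where "y = (g ^^ n) ((g ^^ i) x)" unfolding orbit_of_def by auto
    hence "y = (g ^^ (n + i)) x" by (simp add: funpow_add)
    thus "y \<in> orbit_of g x" unfolding orbit_of_def by blast
  qed
next
  show "orbit_of g x \<subseteq> orbit_of g ((g ^^ i) x)"
  proof
    fix y assume "y \<in> orbit_of g x"
    then obtain n where y: "y = (g ^^ n) x" unfolding orbit_of_def by auto
    have "per g x * i \<ge> i" using per_props(1)[OF assms] by simp
    have "(g ^^ (n + per g x * i - i)) ((g ^^ i) x) = (g ^^ (n + per g x * i)) x"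
    proof -
      have "(g ^^ (n + per g x * i - i)) ((g ^^ i) x) = (g ^^ (n + per g x * i - i + i)) x"
        by (simp add: funpow_add)
      also have "n + per g x * i - i + i = n + per g x * i" using \<open>per g x * i \<ge> i\<close> by linarith
      finally show ?thesis .
    qed
    also have "\<dots> = (g ^^ n) x"
      by (rule funpow_cong_per[OF assms]) (simp add: cong_def)
    finally have "y = (g ^^ (n + per g x * i - i)) ((g ^^ i) x)" using y by simp
    thus "y \<in> orbit_of g ((g ^^ i) x)" unfolding orbit_of_def by blast
  qed
qed

lemma orbit_mem:
  assumes "periodic g x" "y \<in> orbit_of g x" shows "orbit_of g y = orbit_of g x" "periodic g y"
proof -
  from assms(2) obtain n where "y = (g ^^ n) x" unfolding orbit_of_def by auto
  thus "orbit_of g y = orbit_of g x" "periodic g y" using orbit_iter[OF assms(1), of n] periodic_iter[OF assms(1), of n] by simp_all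
qed

lemma iter_in: assumes "\<And>y. y \<in> S \<Longrightarrow> g y \<in> S" "x \<in> S" shows "(g ^^ n) x \<in> S"
proof (induction n)
  case 0 then show ?case using assms(2) by simp
next
  case (Suc n) then show ?case using assms(1) by simp
qed

lemma orbit_sub: assumes "\<And>y. y \<in> S \<Longrightarrow> g y \<in> S" "x \<in> S" shows "orbit_of g x \<subseteq> S"
proof
  fix z assume "z \<in> orbit_of g x"
  then obtain n where "z = (g ^^ n) x" unfolding orbit_of_def by auto
  thus "z \<in> S" using iter_in[of S g x n] assms by simp
qed

lemma num_cycles_eq:
  assumes fin: "finite S" and cl: "\<And>y. y \<in> S \<Longrightarrow> g y \<in> S" and pe: "\<And>y. y \<in> S \<Longrightarrow> periodic g y"
  shows "num_cycles g S L = card {x\<in>S. per g x = L} div L"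
proof -
  define C where "C = {c \<in> cycles_on g S. card c = L}"
  have U: "{x\<in>S. per g x = L} = \<Union>C"
  proof
    show "{x\<in>S. per g x = L} \<subseteq> \<Union>C"
    proof
      fix x assume "x \<in> {x\<in>S. per g x = L}"
      hence "x \<in> S" "per g x = L" by auto
      hence cL: "card (orbit_of g x) = L" using card_orbit[OF pe[of x]] by simp
      have "orbit_of g x \<in> cycles_on g S" unfolding cycles_on_def using \<open>x \<in> S\<close> by (rule imageI)
      hence "orbit_of g x \<in> C" unfolding C_def using cL by simp
      thus "x \<in> \<Union>C" using self_in_orbit[of x g] by (rule UnionI)
    qed
    show "\<Union>C \<subseteq> {x\<in>S. per g x = L}"
    proof
      fix z assume "z \<in> \<Union>C"
      then obtain x where x: "x \<in> S" "z \<in> orbit_of g x" "card (orbit_of g x) = L"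
        unfolding C_def cycles_on_def by auto
      have "orbit_of g x \<subseteq> S" by (rule orbit_sub[OF cl x(1)])
      hence "z \<in> S" using x(2) by blast
      moreover have "per g z = L"
      proof -
        have "per g z = card (orbit_of g z)" using card_orbit[OF orbit_mem(2)[OF pe[OF x(1)] x(2)]] by simp
        also have "\<dots> = L" using orbit_mem(1)[OF pe[OF x(1)] x(2)] x(3) by simp
        finally show ?thesis .
      qed
      ultimately show "z \<in> {x\<in>S. per g x = L}" by simp
    qed
  qed
  have finC: "finite C" unfolding C_def cycles_on_def using fin by simp
  have "card (\<Union>C) = sum card C"
  proof (rule card_Union_disjoint)
    show "pairwise disjnt C"
      unfolding pairwise_def disjnt_def C_def cycles_on_def
    proof (intro ballI impI)
      fix c d assume h1: "c \<in> {c \<in> orbit_of g ` S. card c = L}" and h2: "d \<in> {c \<in> orbit_of g ` S. card c = L}" and h: "c \<noteq> d"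
      from h1 h2 obtain x y where xy: "x \<in> S" "y \<in> S" "c = orbit_of g x" "d = orbit_of g y" by auto
      show "c \<inter> d = {}"
      proof (rule ccontr)
        assume "c \<inter> d \<noteq> {}"
        then obtain z where "z \<in> orbit_of g x" "z \<in> orbit_of g y" using xy by auto
        hence "orbit_of g x = orbit_of g y" using orbit_mem(1)[OF pe[OF xy(1)]] orbit_mem(1)[OF pe[OF xy(2)]] by metis
        thus False using h xy by simp
      qed
    qed
    show "\<And>A. A \<in> C \<Longrightarrow> finite A"
    proof -
      fix A assume "A \<in> C"
      then obtain x where "x \<in> S" "A = orbit_of g x" unfolding C_def cycles_on_def by auto
      thus "finite A" using finite_orbit[OF pe] by simp
    qed
  qed
  also have "\<dots> = (\<Sum>c\<in>C. L)" by (rule sum.cong) (auto simp: C_def)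
  also have "\<dots> = card C * L" by simp
  finally have eq: "card {x\<in>S. per g x = L} = card C * L" using U by simp
  have nc: "num_cycles g S L = card C" unfolding num_cycles_def C_def by simp
  show ?thesis
  proof (cases "L = 0")
    case True
    have "C = {}"
    proof (rule ccontr)
      assume "C \<noteq> {}"
      then obtain x where x: "x \<in> S" "card (orbit_of g x) = 0" unfolding C_def cycles_on_def using True by auto
      have "finite (orbit_of g x)" using finite_orbit[OF pe[OF x(1)]] .
      hence "orbit_of g x = {}" using x(2) by simp
      thus False using self_in_orbit[of x g] by simp
    qed
    thus ?thesis using True nc by simp
  next
    case False thus ?thesis using eq nc by simp
  qed
qed

lemma num_cycles_mult:
  assumes fin: "finite S" and cl: "\<And>y. y \<in> S \<Longrightarrow> g y \<in> S" and pe: "\<And>y. y \<in> S \<Longrightarrow> periodic g y"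
  shows "card {x\<in>S. per g x = L} = num_cycles g S L * L"
proof (cases "L = 0")
  case True
  have "{x\<in>S. per g x = L} = {}"
  proof (rule ccontr)
    assume "{x\<in>S. per g x = L} \<noteq> {}"
    then obtain x where "x \<in> S" "per g x = 0" using True by auto
    thus False using per_props(1)[OF pe[of x]] by simp
  qed
  thus ?thesis using True by (metis card.empty mult_0_right)
next
  case False
  define C where "C = {c \<in> cycles_on g S. card c = L}"
  have nc: "num_cycles g S L = card C" unfolding num_cycles_def C_def by simp
  have U: "{x\<in>S. per g x = L} = \<Union>C"
  proof
    show "{x\<in>S. per g x = L} \<subseteq> \<Union>C"
    proof
      fix x assume "x \<in> {x\<in>S. per g x = L}"
      hence "x \<in> S" "per g x = L" by auto
      hence cL: "card (orbit_of g x) = L" using card_orbit[OF pe[of x]] by simp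
      have "orbit_of g x \<in> cycles_on g S" unfolding cycles_on_def using \<open>x \<in> S\<close> by (rule imageI)
      hence "orbit_of g x \<in> C" unfolding C_def using cL by simp
      thus "x \<in> \<Union>C" using self_in_orbit[of x g] by (rule UnionI)
    qed
    show "\<Union>C \<subseteq> {x\<in>S. per g x = L}"
    proof
      fix z assume "z \<in> \<Union>C"
      then obtain x where x: "x \<in> S" "z \<in> orbit_of g x" "card (orbit_of g x) = L"
        unfolding C_def cycles_on_def by auto
      have "orbit_of g x \<subseteq> S" by (rule orbit_sub[OF cl x(1)])
      hence "z \<in> S" using x(2) by blast
      moreover have "per g z = L"
      proof -
        have "per g z = card (orbit_of g z)" using card_orbit[OF orbit_mem(2)[OF pe[OF x(1)] x(2)]] by simp
        also have "\<dots> = L" using orbit_mem(1)[OF pe[OF x(1)] x(2)] x(3) by simp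
        finally show ?thesis .
      qed
      ultimately show "z \<in> {x\<in>S. per g x = L}" by simp
    qed
  qed
  have "card (\<Union>C) = sum card C"
  proof (rule card_Union_disjoint)
    show "pairwise disjnt C"
      unfolding pairwise_def disjnt_def C_def cycles_on_def
    proof (intro ballI impI)
      fix c d assume h1: "c \<in> {c \<in> orbit_of g ` S. card c = L}" and h2: "d \<in> {c \<in> orbit_of g ` S. card c = L}" and h: "c \<noteq> d"
      from h1 h2 obtain x y where xy: "x \<in> S" "y \<in> S" "c = orbit_of g x" "d = orbit_of g y" by auto
      show "c \<inter> d = {}"
      proof (rule ccontr)
        assume "c \<inter> d \<noteq> {}"
        then obtain z where "z \<in> orbit_of g x" "z \<in> orbit_of g y" using xy by auto
        hence "orbit_of g x = orbit_of g y" using orbit_mem(1)[OF pe[OF xy(1)]] orbit_mem(1)[OF pe[OF xy(2)]] by metis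
        thus False using h xy by simp
      qed
    qed
    show "\<And>A. A \<in> C \<Longrightarrow> finite A"
    proof -
      fix A assume "A \<in> C"
      then obtain x where "x \<in> S" "A = orbit_of g x" unfolding C_def cycles_on_def by auto
      thus "finite A" using finite_orbit[OF pe] by simp
    qed
  qed
  also have "\<dots> = (\<Sum>c\<in>C. L)" by (rule sum.cong) (auto simp: C_def)
  also have "\<dots> = card C * L" by simp
  finally show ?thesis using U nc by simp
qed

lemma inj_on_iter: "inj_on g S \<Longrightarrow> (\<And>y. y \<in> S \<Longrightarrow> g y \<in> S) \<Longrightarrow> inj_on (g ^^ n) S"
proof (induction n)
  case 0 then show ?case by simp
next
  case (Suc n)
  have "inj_on (g \<circ> (g ^^ n)) S"
  proof (rule comp_inj_on[OF Suc.IH[OF Suc.prems]])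
    have "(g ^^ n) ` S \<subseteq> S"
    proof
      fix z assume "z \<in> (g ^^ n) ` S"
      then obtain y where "y \<in> S" "z = (g ^^ n) y" by auto
      thus "z \<in> S" using iter_in[of S g y n] Suc.prems(2) by simp
    qed
    thus "inj_on g ((g ^^ n) ` S)" using Suc.prems(1) inj_on_subset by blast
  qed
  thus ?case by (simp add: o_def)
qed

lemma periodic_finite:
  assumes fin: "finite S" and cl: "\<And>y. y \<in> S \<Longrightarrow> g y \<in> S" and inj: "inj_on g S" and x: "x \<in> S"
  shows "periodic g x" "per g x \<le> card S"
proof -
  have "\<not> inj_on (\<lambda>i. (g ^^ i) x) {..card S}"
  proof
    assume "inj_on (\<lambda>i. (g ^^ i) x) {..card S}"
    moreover have "(\<lambda>i. (g ^^ i) x) ` {..card S} \<subseteq> S"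
    proof
      fix z assume "z \<in> (\<lambda>i. (g ^^ i) x) ` {..card S}"
      then obtain n where "z = (g ^^ n) x" by auto
      thus "z \<in> S" using iter_in[of S g x n] cl x by simp
    qed
    ultimately have "card {..card S} \<le> card S" using card_inj_on_le[OF _ _ fin] by metis
    thus False by simp
  qed
  then obtain i j where ij: "i < j" "j \<le> card S" "(g ^^ i) x = (g ^^ j) x"
    unfolding inj_on_def by (metis atMost_iff linorder_cases)
  have "(g ^^ i) ((g ^^ (j - i)) x) = (g ^^ i) x"
    using ij by (metis funpow_add le_add_diff_inverse less_imp_le o_apply)
  moreover have "inj_on (g ^^ i) S" using inj_on_iter[of g S i] inj cl by simp
  moreover have "(g ^^ (j - i)) x \<in> S" using iter_in[of S g x "j-i"] cl x by simp
  ultimately have e: "(g ^^ (j - i)) x = x"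
    using x unfolding inj_on_def by blast
  thus "periodic g x" unfolding periodic_def using ij by (intro exI[of _ "j-i"]) auto
  have "per g x \<le> j - i" using e ij by (intro per_le) auto
  thus "per g x \<le> card S" using ij by simp
qed



definition H :: "int \<Rightarrow> nat \<Rightarrow> int \<Rightarrow> int \<Rightarrow> int" where
  "H a n b = (\<lambda>x. (a * x + b) mod int n)"

lemma Hol_eq: "Hol a n = H a n ` Zmod n"
  unfolding Hol_def H_def by auto

lemma Zmod_mem: "x \<in> Zmod n \<longleftrightarrow> 0 \<le> x \<and> x < int n"
  unfolding Zmod_def by auto

lemma finite_Zmod: "finite (Zmod n)" unfolding Zmod_def by simp

lemma card_Zmod: "card (Zmod n) = n" unfolding Zmod_def by simp

lemma inj_H: assumes "n \<ge> 1" shows "inj_on (H a n) (Zmod n)"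
proof (rule inj_onI)
  fix b c assume "b \<in> Zmod n" "c \<in> Zmod n" "H a n b = H a n c"
  hence "H a n b 0 = H a n c 0" by simp
  thus "b = c" using \<open>b \<in> Zmod n\<close> \<open>c \<in> Zmod n\<close> unfolding H_def Zmod_mem by simp
qed

lemma CC_Hol_sum: assumes "n \<ge> 1" shows "CC_Hol a n = (\<Sum>b\<in>Zmod n. CT (H a n b) (Zmod n))"
  unfolding CC_Hol_def CC_def Hol_eq using sum.reindex[OF inj_H[OF assms]] by (simp add: o_def)

lemma H_closed: assumes "n \<ge> 1" shows "H a n b y \<in> Zmod n"
  using assms unfolding H_def Zmod_mem by simp

lemma H_inj: assumes "coprime a (int n)" shows "inj_on (H a n b) (Zmod n)"
proof (rule inj_onI)
  fix x y assume "x \<in> Zmod n" "y \<in> Zmod n" "H a n b x = H a n b y"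
  hence "[a * x + b = a * y + b] (mod int n)" unfolding H_def cong_def by simp
  hence "[x * a = y * a] (mod int n)" by (metis cong_add_rcancel mult.commute)
  hence "[x = y] (mod int n)" using cong_mult_rcancel[of a "int n" x y] assms by simp
  thus "x = y" using \<open>x \<in> Zmod n\<close> \<open>y \<in> Zmod n\<close> unfolding cong_def Zmod_mem by simp
qed

lemma H_periodic:
  assumes "n \<ge> 1" "coprime a (int n)" "x \<in> Zmod n"
  shows "periodic (H a n b) x" "per (H a n b) x \<le> n"
  using periodic_finite[OF finite_Zmod H_closed[OF assms(1)] H_inj[OF assms(2)] assms(3)]
  by (simp_all add: card_Zmod)

lemma H_iter:
  assumes "x \<in> Zmod n"
  shows "(H a n b ^^ d) x = (a ^ d * x + b * (\<Sum>i<d. a ^ i)) mod int n"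
proof (induction d)
  case 0 then show ?case using assms unfolding Zmod_mem by simp
next
  case (Suc d)
  have "(H a n b ^^ Suc d) x = (a * ((a ^ d * x + b * (\<Sum>i<d. a ^ i)) mod int n) + b) mod int n"
    using Suc by (simp add: H_def)
  also have "\<dots> = (a * (a ^ d * x + b * (\<Sum>i<d. a ^ i)) + b) mod int n"
    by (metis mod_add_left_eq mod_mult_right_eq)
  also have "a * (a ^ d * x + b * (\<Sum>i<d. a ^ i)) + b = a ^ Suc d * x + b * (\<Sum>i<Suc d. a ^ i)"
  proof -
    have "(\<Sum>i<Suc d. a ^ i) = 1 + a * (\<Sum>i<d. a ^ i)"
      by (simp add: sum.lessThan_Suc_shift sum_distrib_left del: sum.lessThan_Suc)
    thus ?thesis by (simp add: algebra_simps)
  qed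
  finally show ?case .
qed

lemma CT_cong:
  assumes "\<And>x. x \<in> S \<Longrightarrow> orbit_of h x = orbit_of g x"
  shows "CT h S = CT g S"
proof -
  have "cycles_on h S = cycles_on g S" unfolding cycles_on_def using assms by (rule image_cong[OF refl])
  thus ?thesis unfolding CT_def num_cycles_def by simp
qed

lemma orbit_pow:
  assumes "periodic g x" "coprime u (per g x)"
  shows "orbit_of (g ^^ u) x = orbit_of g x"
proof
  show "orbit_of (g ^^ u) x \<subseteq> orbit_of g x"
  proof
    fix y assume "y \<in> orbit_of (g ^^ u) x"
    then obtain n where "y = ((g ^^ u) ^^ n) x" unfolding orbit_of_def by auto
    hence "y = (g ^^ (u * n)) x" by (simp add: funpow_mult)
    thus "y \<in> orbit_of g x" unfolding orbit_of_def by blast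
  qed
next
  obtain v where v: "[u * v = Suc 0] (mod per g x)" using cong_solve_coprime_nat[OF assms(2)] by blast
  show "orbit_of g x \<subseteq> orbit_of (g ^^ u) x"
  proof
    fix y assume "y \<in> orbit_of g x"
    then obtain n where y: "y = (g ^^ n) x" unfolding orbit_of_def by auto
    have "[u * v * n = Suc 0 * n] (mod per g x)" using v by (rule cong_scalar_right)
    hence "(g ^^ (u * v * n)) x = (g ^^ n) x" using funpow_cong_per[OF assms(1)] by simp
    hence "y = ((g ^^ u) ^^ (v * n)) x" using y by (simp add: funpow_mult mult.assoc)
    thus "y \<in> orbit_of (g ^^ u) x" unfolding orbit_of_def by blast
  qed
qed

lemma iter_agree:
  assumes "\<And>y. y \<in> S \<Longrightarrow> h y = k y" "\<And>y. y \<in> S \<Longrightarrow> k y \<in> S" "x \<in> S"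
  shows "(h ^^ n) x = (k ^^ n) x"
proof (induction n)
  case 0 then show ?case by simp
next
  case (Suc n)
  have "(k ^^ n) x \<in> S" using iter_in[of S k x n] assms(2,3) by simp
  thus ?case using Suc assms(1) by simp
qed

lemma orbit_agree:
  assumes "\<And>y. y \<in> S \<Longrightarrow> h y = k y" "\<And>y. y \<in> S \<Longrightarrow> k y \<in> S" "x \<in> S"
  shows "orbit_of h x = orbit_of k x"
  unfolding orbit_of_def using iter_agree[OF assms] by simp

lemma lemmaA:
  assumes n: "n \<ge> 1" and a: "coprime a (int n)" and u: "coprime u (fact n)"
    and s: "coprime (\<Sum>i<u. a ^ i) (int n)" and a': "[a' = a ^ u] (mod int n)"
  shows "CC_Hol a' n = CC_Hol a n"
proof -
  define s where "s = (\<Sum>i<u. a ^ i)"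
  define S where "S = Zmod n"
  have eqCT: "CT (H a' n ((b * s) mod int n)) S = CT (H a n b) S" if b: "b \<in> S" for b
  proof (rule CT_cong)
    fix x assume x: "x \<in> S"
    have "orbit_of (H a' n ((b * s) mod int n)) x = orbit_of (H a n b ^^ u) x"
    proof (rule orbit_agree[where S = S])
      fix y assume y: "y \<in> S"
      have "[a' * y + (b * s) mod int n = a ^ u * y + b * s] (mod int n)"
        by (intro cong_add cong_mult a' cong_refl) (simp add: cong_def)
      hence "H a' n ((b * s) mod int n) y = (a ^ u * y + b * s) mod int n"
        unfolding H_def cong_def by simp
      also have "\<dots> = (H a n b ^^ u) y" using H_iter[where x=y and d=u and a=a and b=b and n=n] y unfolding S_def s_def by simp
      finally show "H a' n ((b * s) mod int n) y = (H a n b ^^ u) y" .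
    next
      fix y assume y: "y \<in> S"
      show "(H a n b ^^ u) y \<in> S" using iter_in[of S "H a n b" y u] H_closed[OF n] y unfolding S_def by simp
    qed (rule x)
    also have "\<dots> = orbit_of (H a n b) x"
    proof (rule orbit_pow)
      show "periodic (H a n b) x" using H_periodic[OF n a] x unfolding S_def by simp
      have "per (H a n b) x dvd fact n"
        using H_periodic[OF n a, of x b] per_props(1)[of "H a n b" x] x unfolding S_def
        by (intro dvd_fact) auto
      thus "coprime u (per (H a n b) x)" using u coprime_divisors[of u u "per (H a n b) x" "fact n"] by simp
    qed
    finally show "orbit_of (H a' n ((b * s) mod int n)) x = orbit_of (H a n b) x" .
  qed
  have bij: "bij_betw (\<lambda>b. (b * s) mod int n) S S"
  proof -
    have inj: "inj_on (\<lambda>b. (b * s) mod int n) S"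
    proof (rule inj_onI)
      fix x y assume xy: "x \<in> S" "y \<in> S" "(x * s) mod int n = (y * s) mod int n"
      hence "[x * s = y * s] (mod int n)" unfolding cong_def by simp
      hence "[x = y] (mod int n)" using cong_mult_rcancel[of s "int n" x y] s unfolding s_def by simp
      thus "x = y" using xy unfolding cong_def S_def Zmod_mem by simp
    qed
    moreover have sub: "(\<lambda>b. (b * s) mod int n) ` S \<subseteq> S" using n unfolding S_def by (auto simp: Zmod_mem)
    moreover have "card ((\<lambda>b. (b * s) mod int n) ` S) = card S" using inj by (simp add: card_image)
    ultimately have "(\<lambda>b. (b * s) mod int n) ` S = S"
      using card_subset_eq[OF _ sub] finite_Zmod unfolding S_def by metis
    thus ?thesis using inj unfolding bij_betw_def by simp
  qed
  have "CC_Hol a' n = (\<Sum>b\<in>S. CT (H a' n b) S)" using CC_Hol_sum[OF n] unfolding S_def by simp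
  also have "\<dots> = (\<Sum>b\<in>S. CT (H a' n ((b * s) mod int n)) S)"
    using sum.reindex_bij_betw[OF bij, of "\<lambda>b. CT (H a' n b) S"] by simp
  also have "\<dots> = (\<Sum>b\<in>S. CT (H a n b) S)" using eqCT by (rule sum.cong[OF refl])
  also have "\<dots> = CC_Hol a n" using CC_Hol_sum[OF n] unfolding S_def by simp
  finally show ?thesis .
qed



lemma sum_group:
  assumes "finite S"
  shows "(\<Sum>x\<in>S. F (p x)) = (\<Sum>i\<in>p ` S. card {x\<in>S. p x = i} * F i)"
proof -
  have "(\<Sum>x\<in>S. F (p x)) = (\<Sum>i\<in>p ` S. \<Sum>x\<in>{x\<in>S. p x = i}. F (p x))"
    by (rule sum.image_gen[OF assms])
  also have "\<dots> = (\<Sum>i\<in>p ` S. card {x\<in>S. p x = i} * F i)"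
  proof (rule sum.cong[OF refl])
    fix i assume "i \<in> p ` S"
    have "(\<Sum>x\<in>{x\<in>S. p x = i}. F (p x)) = (\<Sum>x\<in>{x\<in>S. p x = i}. F i)" by (rule sum.cong) auto
    thus "(\<Sum>x\<in>{x\<in>S. p x = i}. F (p x)) = card {x\<in>S. p x = i} * F i" by simp
  qed
  finally show ?thesis .
qed

lemma card_filter_sum: "finite A \<Longrightarrow> card {x\<in>A. P x} = (\<Sum>x\<in>A. if P x then 1 else 0)"
  using sum.inter_filter[of A "\<lambda>_. 1::nat" P] by simp

lemma keys_Abs:
  assumes "finite S1" and pos: "\<And>x. x \<in> S1 \<Longrightarrow> p1 x > 0"
    and c1: "\<And>L. card {x\<in>S1. p1 x = L} = c1 L * L" and c10: "c1 0 = 0"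
  shows "{i. c1 i \<noteq> 0} = p1 ` S1"
proof (rule equalityI; rule subsetI)
  fix i assume "i \<in> {i. c1 i \<noteq> 0}"
  hence "c1 i \<noteq> 0" by simp
  hence "i \<noteq> 0" using c10 by (metis)
  hence "card {x\<in>S1. p1 x = i} \<noteq> 0" using c1[of i] \<open>c1 i \<noteq> 0\<close> by simp
  then obtain x where "x \<in> S1" "p1 x = i" by (metis (mono_tags, lifting) card.empty empty_Collect_eq)
  thus "i \<in> p1 ` S1" by blast
next
  fix i assume "i \<in> p1 ` S1"
  then obtain x where x: "x \<in> S1" "p1 x = i" by blast
  have "{x\<in>S1. p1 x = i} \<noteq> {}" using x by blast
  hence "card {x\<in>S1. p1 x = i} \<noteq> 0" using assms(1) by simp
  thus "i \<in> {i. c1 i \<noteq> 0}" using c1[of i] by auto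
qed

lemma lookup_star_mono:
  "Poly_Mapping.lookup (star_mono \<alpha> \<beta>) L =
   (\<Sum>i\<in>Poly_Mapping.keys \<alpha>. \<Sum>j\<in>Poly_Mapping.keys \<beta>. if lcm i j = L then Poly_Mapping.lookup \<alpha> i * Poly_Mapping.lookup \<beta> j * gcd i j else 0)"
  unfolding star_mono_def by (simp add: lookup_sum lookup_single when_def)

lemma generic_star:
  assumes fin1: "finite S1" and fin2: "finite S2"
    and pos1: "\<And>x. x \<in> S1 \<Longrightarrow> p1 x > 0" and pos2: "\<And>y. y \<in> S2 \<Longrightarrow> p2 y > 0"
    and c1: "\<And>L. card {x\<in>S1. p1 x = L} = c1 L * L" and c10: "c1 0 = 0"
    and c2: "\<And>L. card {y\<in>S2. p2 y = L} = c2 L * L" and c20: "c2 0 = 0"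
    and c: "\<And>L. card {w\<in>S1 \<times> S2. lcm (p1 (fst w)) (p2 (snd w)) = L} = c L * L" and c0: "c 0 = 0"
  shows "Abs_poly_mapping c = star_mono (Abs_poly_mapping c1) (Abs_poly_mapping c2)"
proof -
  define K1 where "K1 = p1 ` S1"
  define K2 where "K2 = p2 ` S2"
  have k1: "{i. c1 i \<noteq> 0} = K1" unfolding K1_def using keys_Abs[OF fin1 pos1 c1 c10] .
  have k2: "{i. c2 i \<noteq> 0} = K2" unfolding K2_def using keys_Abs[OF fin2 pos2 c2 c20] .
  have fK1: "finite K1" "finite K2" unfolding K1_def K2_def using fin1 fin2 by auto
  have l1: "Poly_Mapping.lookup (Abs_poly_mapping c1) = c1" using k1 fK1 by simp
  have l2: "Poly_Mapping.lookup (Abs_poly_mapping c2) = c2" using k2 fK1 by simp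
  have kk1: "Poly_Mapping.keys (Abs_poly_mapping c1) = K1" using l1 k1 by (auto simp: in_keys_iff)
  have kk2: "Poly_Mapping.keys (Abs_poly_mapping c2) = K2" using l2 k2 by (auto simp: in_keys_iff)
  have K1pos: "\<And>i. i \<in> K1 \<Longrightarrow> i > 0" unfolding K1_def using pos1 by auto
  have K2pos: "\<And>i. i \<in> K2 \<Longrightarrow> i > 0" unfolding K2_def using pos2 by auto
  define F where "F L = (\<Sum>i\<in>K1. \<Sum>j\<in>K2. if lcm i j = L then c1 i * c2 j * gcd i j else 0)" for L
  have lk: "Poly_Mapping.lookup (star_mono (Abs_poly_mapping c1) (Abs_poly_mapping c2)) L = F L" for L
    unfolding lookup_star_mono kk1 kk2 l1 l2 F_def ..
  have main: "c L = F L" for L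
  proof (cases "L = 0")
    case True
    have "F 0 = 0" unfolding F_def using K1pos K2pos by (intro sum.neutral ballI) auto
    thus ?thesis using True c0 by simp
  next
    case False
    have "c L * L = card {w\<in>S1 \<times> S2. lcm (p1 (fst w)) (p2 (snd w)) = L}" using c by simp
    also have "\<dots> = (\<Sum>w\<in>S1 \<times> S2. if lcm (p1 (fst w)) (p2 (snd w)) = L then 1 else 0)"
      using fin1 fin2 by (intro card_filter_sum) simp
    also have "\<dots> = (\<Sum>x\<in>S1. \<Sum>y\<in>S2. if lcm (p1 x) (p2 y) = L then 1 else 0)"
      by (simp add: sum.cartesian_product case_prod_unfold)
    also have "\<dots> = (\<Sum>x\<in>S1. \<Sum>j\<in>K2. card {y\<in>S2. p2 y = j} * (if lcm (p1 x) j = L then 1 else 0))"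
      unfolding K2_def by (intro sum.cong[OF refl] sum_group[OF fin2])
    also have "\<dots> = (\<Sum>i\<in>K1. card {x\<in>S1. p1 x = i} * (\<Sum>j\<in>K2. card {y\<in>S2. p2 y = j} * (if lcm i j = L then 1 else 0)))"
      unfolding K1_def using sum_group[OF fin1, of "\<lambda>i. \<Sum>j\<in>K2. card {y\<in>S2. p2 y = j} * (if lcm i j = L then 1 else 0)" p1] by simp
    also have "\<dots> = (\<Sum>i\<in>K1. \<Sum>j\<in>K2. if lcm i j = L then (c1 i * i) * (c2 j * j) else 0)"
      by (simp add: c1 c2 sum_distrib_left if_distrib cong: if_cong)
    also have "\<dots> = (\<Sum>i\<in>K1. \<Sum>j\<in>K2. if lcm i j = L then (c1 i * c2 j * gcd i j) * L else 0)"
      by (intro sum.cong[OF refl]) (auto simp: prod_gcd_lcm_nat[symmetric] ac_simps)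
    also have "\<dots> = F L * L" unfolding F_def sum_distrib_right by (intro sum.cong[OF refl]) simp
    finally show ?thesis using False by simp
  qed
  show ?thesis
  proof (rule poly_mapping_eqI)
    fix L
    have "finite {L. c L \<noteq> 0}"
    proof -
      have "{L. c L \<noteq> 0} \<subseteq> (\<lambda>(i, j). lcm i j) ` (K1 \<times> K2)"
      proof
        fix L assume "L \<in> {L. c L \<noteq> 0}"
        hence "F L \<noteq> 0" using main by simp
        hence h: "(\<Sum>i\<in>K1. \<Sum>j\<in>K2. if lcm i j = L then c1 i * c2 j * gcd i j else 0) \<noteq> 0"
          unfolding F_def .
        obtain i where i: "i \<in> K1" "(\<Sum>j\<in>K2. if lcm i j = L then c1 i * c2 j * gcd i j else 0) \<noteq> 0"
          by (rule sum.not_neutral_contains_not_neutral[OF h])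
        obtain j where j: "j \<in> K2" "(if lcm i j = L then c1 i * c2 j * gcd i j else 0) \<noteq> 0"
          by (rule sum.not_neutral_contains_not_neutral[OF i(2)])
        have "lcm i j = L" using j(2) by (cases "lcm i j = L") auto
        with i(1) j(1) show "L \<in> (\<lambda>(i, j). lcm i j) ` (K1 \<times> K2)" by force
      qed
      thus ?thesis using fK1 by (meson finite_SigmaI finite_imageI finite_subset)
    qed
    thus "Poly_Mapping.lookup (Abs_poly_mapping c) L = Poly_Mapping.lookup (star_mono (Abs_poly_mapping c1) (Abs_poly_mapping c2)) L"
      using main lk by simp
  qed
qed



section \<open>star algebra\<close>

lemma star_alt:
  assumes "finite A" "Poly_Mapping.keys P \<subseteq> A" "finite B" "Poly_Mapping.keys Q \<subseteq> B"
  shows "star P Q = (\<Sum>\<alpha>\<in>A. \<Sum>\<beta>\<in>B. Poly_Mapping.single (star_mono \<alpha> \<beta>)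
                         (Poly_Mapping.lookup P \<alpha> * Poly_Mapping.lookup Q \<beta>))"
proof -
  have inner: "(\<Sum>\<beta>\<in>Poly_Mapping.keys Q. Poly_Mapping.single (star_mono \<alpha> \<beta>) (Poly_Mapping.lookup P \<alpha> * Poly_Mapping.lookup Q \<beta>))
     = (\<Sum>\<beta>\<in>B. Poly_Mapping.single (star_mono \<alpha> \<beta>) (Poly_Mapping.lookup P \<alpha> * Poly_Mapping.lookup Q \<beta>))" for \<alpha>
    by (rule sum.mono_neutral_left[OF assms(3,4)]) (auto simp: in_keys_iff)
  have "star P Q = (\<Sum>\<alpha>\<in>Poly_Mapping.keys P. \<Sum>\<beta>\<in>B. Poly_Mapping.single (star_mono \<alpha> \<beta>)
                         (Poly_Mapping.lookup P \<alpha> * Poly_Mapping.lookup Q \<beta>))"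
    unfolding star_def using inner by simp
  also have "\<dots> = (\<Sum>\<alpha>\<in>A. \<Sum>\<beta>\<in>B. Poly_Mapping.single (star_mono \<alpha> \<beta>)
                         (Poly_Mapping.lookup P \<alpha> * Poly_Mapping.lookup Q \<beta>))"
    by (rule sum.mono_neutral_left[OF assms(1,2)]) (auto simp: in_keys_iff)
  finally show ?thesis .
qed

lemma star_add_left: "star (P + P') Q = star P Q + star P' Q"
proof -
  define A where "A = Poly_Mapping.keys P \<union> Poly_Mapping.keys P'"
  have fA: "finite A" unfolding A_def by simp
  have k: "Poly_Mapping.keys (P + P') \<subseteq> A" "Poly_Mapping.keys P \<subseteq> A" "Poly_Mapping.keys P' \<subseteq> A"
    unfolding A_def using keys_add[of P P'] by auto
  show ?thesis
    unfolding star_alt[OF fA k(1) finite_keys order_refl] star_alt[OF fA k(2) finite_keys order_refl]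
      star_alt[OF fA k(3) finite_keys order_refl]
    by (simp add: lookup_add distrib_right single_add sum.distrib)
qed

lemma star_add_right: "star Q (P + P') = star Q P + star Q P'"
proof -
  define A where "A = Poly_Mapping.keys P \<union> Poly_Mapping.keys P'"
  have fA: "finite A" unfolding A_def by simp
  have k: "Poly_Mapping.keys (P + P') \<subseteq> A" "Poly_Mapping.keys P \<subseteq> A" "Poly_Mapping.keys P' \<subseteq> A"
    unfolding A_def using keys_add[of P P'] by auto
  show ?thesis
    unfolding star_alt[OF finite_keys order_refl fA k(1)] star_alt[OF finite_keys order_refl fA k(2)]
      star_alt[OF finite_keys order_refl fA k(3)]
    by (simp add: lookup_add distrib_left single_add sum.distrib)
qed

lemma star_zero_left: "star 0 Q = 0" unfolding star_def by simp
lemma star_zero_right: "star Q 0 = 0" unfolding star_def by simp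

lemma star_sum_left: "finite I \<Longrightarrow> star (\<Sum>i\<in>I. P i) Q = (\<Sum>i\<in>I. star (P i) Q)"
  by (induction I rule: finite_induct) (simp_all add: star_zero_left star_add_left)

lemma star_sum_right: "finite I \<Longrightarrow> star Q (\<Sum>i\<in>I. P i) = (\<Sum>i\<in>I. star Q (P i))"
  by (induction I rule: finite_induct) (simp_all add: star_zero_right star_add_right)

lemma star_single: "star (Poly_Mapping.single \<alpha> c) (Poly_Mapping.single \<beta> d) = Poly_Mapping.single (star_mono \<alpha> \<beta>) (c * d)"
proof -
  have k: "Poly_Mapping.keys (Poly_Mapping.single \<alpha> c) \<subseteq> {\<alpha>}" "Poly_Mapping.keys (Poly_Mapping.single \<beta> d) \<subseteq> {\<beta>}"
    by (simp_all add: keys_single)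
  show ?thesis by (subst star_alt[OF _ k(1) _ k(2)]) simp_all
qed

section \<open>CRT\<close>

lemma crt_bij:
  assumes "m \<ge> 1" "n \<ge> 1" "coprime m n"
  shows "bij_betw (\<lambda>z. (z mod int m, z mod int n)) (Zmod (m * n)) (Zmod m \<times> Zmod n)"
proof -
  have inj: "inj_on (\<lambda>z. (z mod int m, z mod int n)) (Zmod (m * n))"
  proof (rule inj_onI)
    fix x y assume xy: "x \<in> Zmod (m * n)" "y \<in> Zmod (m * n)" "(x mod int m, x mod int n) = (y mod int m, y mod int n)"
    hence "[x = y] (mod int m)" "[x = y] (mod int n)" unfolding cong_def by auto
    moreover have "coprime (int m) (int n)" using assms(3) by simp
    ultimately have "[x = y] (mod int m * int n)" by (rule coprime_cong_mult)
    thus "x = y" using xy(1,2) unfolding cong_def Zmod_mem by simp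
  qed
  have sub: "(\<lambda>z. (z mod int m, z mod int n)) ` Zmod (m * n) \<subseteq> Zmod m \<times> Zmod n"
    using assms by (auto simp: Zmod_mem)
  have "card ((\<lambda>z. (z mod int m, z mod int n)) ` Zmod (m * n)) = card (Zmod m \<times> Zmod n)"
    using inj by (simp add: card_image card_Zmod card_cartesian_product)
  hence "(\<lambda>z. (z mod int m, z mod int n)) ` Zmod (m * n) = Zmod m \<times> Zmod n"
    using card_subset_eq[OF _ sub] finite_Zmod by (metis finite_SigmaI)
  thus ?thesis using inj unfolding bij_betw_def by simp
qed

lemma iter_mod:
  assumes "m \<ge> 1" "n \<ge> 1" "z \<in> Zmod (m * n)"
  shows "(H a (m * n) b ^^ d) z mod int m = (H a m (b mod int m) ^^ d) (z mod int m)"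
proof -
  have zm: "z mod int m \<in> Zmod m" using assms unfolding Zmod_mem by simp
  have "(H a (m * n) b ^^ d) z mod int m = ((a ^ d * z + b * (\<Sum>i<d. a ^ i)) mod int (m * n)) mod int m"
    using H_iter[OF assms(3)] by simp
  also have "\<dots> = (a ^ d * z + b * (\<Sum>i<d. a ^ i)) mod int m"
    by (simp add: mod_mod_cancel)
  also have "\<dots> = (a ^ d * (z mod int m) + (b mod int m) * (\<Sum>i<d. a ^ i)) mod int m"
    by (metis mod_add_cong mod_mult_left_eq mod_mult_right_eq)
  also have "\<dots> = (H a m (b mod int m) ^^ d) (z mod int m)"
    using H_iter[OF zm] by simp
  finally show ?thesis .
qed

lemma per_crt:
  assumes m: "m \<ge> 1" and n: "n \<ge> 1" and mn: "coprime m n" and a: "coprime a (int (m * n))"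
    and z: "z \<in> Zmod (m * n)"
  shows "per (H a (m * n) b) z = lcm (per (H a m (b mod int m)) (z mod int m)) (per (H a n (b mod int n)) (z mod int n))"
proof -
  define g where "g = H a (m * n) b"
  define g1 where "g1 = H a m (b mod int m)"
  define g2 where "g2 = H a n (b mod int n)"
  have a1: "coprime a (int m)" and a2: "coprime a (int n)" using a by auto
  have zm: "z mod int m \<in> Zmod m" and zn: "z mod int n \<in> Zmod n" using m n unfolding Zmod_mem by simp_all
  have mn1: "m * n \<ge> 1" using m n by simp
  have pg: "periodic g z" unfolding g_def by (rule H_periodic[OF mn1 a z])
  have pg1: "periodic g1 (z mod int m)" unfolding g1_def by (rule H_periodic[OF m a1 zm])
  have pg2: "periodic g2 (z mod int n)" unfolding g2_def by (rule H_periodic[OF n a2 zn])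
  have it1: "(g ^^ d) z mod int m = (g1 ^^ d) (z mod int m)" for d
    unfolding g_def g1_def by (rule iter_mod[OF m n z])
  have it2: "(g ^^ d) z mod int n = (g2 ^^ d) (z mod int n)" for d
    unfolding g_def g2_def using iter_mod[OF n m, where z=z and a=a and b=b and d=d] z by (simp add: mult.commute)
  have iff: "(g ^^ d) z = z \<longleftrightarrow> (g1 ^^ d) (z mod int m) = z mod int m \<and> (g2 ^^ d) (z mod int n) = z mod int n" for d
  proof
    assume "(g ^^ d) z = z" thus "(g1 ^^ d) (z mod int m) = z mod int m \<and> (g2 ^^ d) (z mod int n) = z mod int n"
      using it1[of d] it2[of d] by simp
  next
    assume h: "(g1 ^^ d) (z mod int m) = z mod int m \<and> (g2 ^^ d) (z mod int n) = z mod int n"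
    hence "[(g ^^ d) z = z] (mod int m)" "[(g ^^ d) z = z] (mod int n)"
      using it1[of d] it2[of d] unfolding cong_def by simp_all
    moreover have "coprime (int m) (int n)" using mn by simp
    ultimately have "[(g ^^ d) z = z] (mod int m * int n)" by (rule coprime_cong_mult)
    moreover have "(g ^^ d) z \<in> Zmod (m * n)" using iter_in[of "Zmod (m*n)" g z d] H_closed[OF mn1] z unfolding g_def by simp
    ultimately show "(g ^^ d) z = z" using z unfolding cong_def Zmod_mem by simp
  qed
  have dv: "per g z dvd d \<longleftrightarrow> lcm (per g1 (z mod int m)) (per g2 (z mod int n)) dvd d" for d
    using iff[of d] per_dvd_iff[OF pg] per_dvd_iff[OF pg1] per_dvd_iff[OF pg2] by simp
  show ?thesis unfolding g_def[symmetric] g1_def[symmetric] g2_def[symmetric]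
    using dv[of "per g z"] dv[of "lcm (per g1 (z mod int m)) (per g2 (z mod int n))"]
    by (intro dvd_antisym) simp_all
qed



definition MH :: "int \<Rightarrow> nat \<Rightarrow> int \<Rightarrow> mono" where
  "MH a n b = Abs_poly_mapping (num_cycles (H a n b) (Zmod n))"

lemma CT_H: "CT (H a n b) (Zmod n) = Poly_Mapping.single (MH a n b) 1"
  unfolding CT_def MH_def monomial_poly_def ..

lemma CC_Hol_MH: "n \<ge> 1 \<Longrightarrow> CC_Hol a n = (\<Sum>b\<in>Zmod n. Poly_Mapping.single (MH a n b) 1)"
  using CC_Hol_sum by (simp add: CT_H)

lemma count_H:
  assumes "n \<ge> 1" "coprime a (int n)"
  shows "card {x\<in>Zmod n. per (H a n b) x = L} = num_cycles (H a n b) (Zmod n) L * L"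
  by (rule num_cycles_mult[OF finite_Zmod H_closed[OF assms(1)] H_periodic(1)[OF assms]])

lemma nc0_H:
  assumes "n \<ge> 1" "coprime a (int n)"
  shows "num_cycles (H a n b) (Zmod n) 0 = 0"
  using num_cycles_eq[where L=0 and g="H a n b", OF finite_Zmod H_closed[OF assms(1)] H_periodic(1)[OF assms]] by simp

lemma mono_split:
  assumes m: "m \<ge> 1" and n: "n \<ge> 1" and mn: "coprime m n" and a: "coprime a (int (m * n))"
    and b: "b \<in> Zmod (m * n)"
  shows "MH a (m * n) b = star_mono (MH a m (b mod int m)) (MH a n (b mod int n))"
proof -
  define g where "g = H a (m * n) b"
  define g1 where "g1 = H a m (b mod int m)"
  define g2 where "g2 = H a n (b mod int n)"
  define \<phi> where "\<phi> = (\<lambda>z. (z mod int m, z mod int n))"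
  have a1: "coprime a (int m)" and a2: "coprime a (int n)" using a by auto
  have mn1: "m * n \<ge> 1" using m n by simp
  have bij: "bij_betw \<phi> (Zmod (m * n)) (Zmod m \<times> Zmod n)" unfolding \<phi>_def by (rule crt_bij[OF m n mn])
  show ?thesis unfolding MH_def
  proof (rule generic_star[of "Zmod m" "Zmod n" "per g1" "per g2"])
    show "finite (Zmod m)" "finite (Zmod n)" by (rule finite_Zmod)+
    show "\<And>x. x \<in> Zmod m \<Longrightarrow> 0 < per g1 x" unfolding g1_def using per_props(1)[OF H_periodic(1)[OF m a1]] by blast
    show "\<And>x. x \<in> Zmod n \<Longrightarrow> 0 < per g2 x" unfolding g2_def using per_props(1)[OF H_periodic(1)[OF n a2]] by blast
    show "\<And>L. card {x\<in>Zmod m. per g1 x = L} = num_cycles (H a m (b mod int m)) (Zmod m) L * L"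
      unfolding g1_def by (rule count_H[OF m a1])
    show "\<And>L. card {x\<in>Zmod n. per g2 x = L} = num_cycles (H a n (b mod int n)) (Zmod n) L * L"
      unfolding g2_def by (rule count_H[OF n a2])
    show "num_cycles (H a m (b mod int m)) (Zmod m) 0 = 0" by (rule nc0_H[OF m a1])
    show "num_cycles (H a n (b mod int n)) (Zmod n) 0 = 0" by (rule nc0_H[OF n a2])
    show "num_cycles (H a (m * n) b) (Zmod (m * n)) 0 = 0" by (rule nc0_H[OF mn1 a])
    fix L
    define P where "P = (\<lambda>w. lcm (per g1 (fst w)) (per g2 (snd w)) = L)"
    have img: "\<phi> ` Zmod (m * n) = Zmod m \<times> Zmod n" using bij_betw_imp_surj_on[OF bij] .
    have "{w \<in> Zmod m \<times> Zmod n. P w} = \<phi> ` {z \<in> Zmod (m * n). P (\<phi> z)}"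
    proof (rule equalityI; rule subsetI)
      fix w assume "w \<in> {w \<in> Zmod m \<times> Zmod n. P w}"
      hence w: "w \<in> \<phi> ` Zmod (m * n)" "P w" using img by auto
      then obtain z where "z \<in> Zmod (m * n)" "w = \<phi> z" by auto
      thus "w \<in> \<phi> ` {z \<in> Zmod (m * n). P (\<phi> z)}" using w(2) by auto
    next
      fix w assume "w \<in> \<phi> ` {z \<in> Zmod (m * n). P (\<phi> z)}"
      thus "w \<in> {w \<in> Zmod m \<times> Zmod n. P w}" using img by auto
    qed
    hence "card {w \<in> Zmod m \<times> Zmod n. P w} = card {z \<in> Zmod (m * n). P (\<phi> z)}"
      using bij_betw_imp_inj_on[OF bij] by (simp add: card_image inj_on_subset)
    also have "{z \<in> Zmod (m * n). P (\<phi> z)} = {z \<in> Zmod (m * n). per g z = L}"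
      unfolding P_def \<phi>_def g_def g1_def g2_def using per_crt[OF m n mn a] by auto
    also have "card \<dots> = num_cycles (H a (m * n) b) (Zmod (m * n)) L * L"
      unfolding g_def by (rule count_H[OF mn1 a])
    finally show "card {w \<in> Zmod m \<times> Zmod n. lcm (per g1 (fst w)) (per g2 (snd w)) = L} =
        num_cycles (H a (m * n) b) (Zmod (m * n)) L * L" unfolding P_def .
  qed
qed

lemma CC_Hol_mult:
  assumes m: "m \<ge> 1" and n: "n \<ge> 1" and mn: "coprime m n" and a: "coprime a (int (m * n))"
  shows "CC_Hol a (m * n) = star (CC_Hol a m) (CC_Hol a n)"
proof -
  define \<phi> where "\<phi> = (\<lambda>z. (z mod int m, z mod int n))"
  have mn1: "m * n \<ge> 1" using m n by simp
  have bij: "bij_betw \<phi> (Zmod (m * n)) (Zmod m \<times> Zmod n)" unfolding \<phi>_def by (rule crt_bij[OF m n mn])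
  define G where "G = (\<lambda>w. Poly_Mapping.single (star_mono (MH a m (fst w)) (MH a n (snd w))) (1::rat))"
  have "CC_Hol a (m * n) = (\<Sum>b\<in>Zmod (m * n). Poly_Mapping.single (MH a (m * n) b) 1)"
    by (rule CC_Hol_MH[OF mn1])
  also have "\<dots> = (\<Sum>b\<in>Zmod (m * n). G (\<phi> b))"
    unfolding G_def \<phi>_def using mono_split[OF m n mn a] by (intro sum.cong[OF refl]) simp
  also have "\<dots> = (\<Sum>w\<in>Zmod m \<times> Zmod n. G w)" by (rule sum.reindex_bij_betw[OF bij])
  also have "\<dots> = (\<Sum>b1\<in>Zmod m. \<Sum>b2\<in>Zmod n. G (b1, b2))"
    by (simp add: sum.cartesian_product)
  also have "\<dots> = (\<Sum>b1\<in>Zmod m. \<Sum>b2\<in>Zmod n. star (Poly_Mapping.single (MH a m b1) 1) (Poly_Mapping.single (MH a n b2) 1))"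
    unfolding G_def by (simp add: star_single)
  also have "\<dots> = (\<Sum>b1\<in>Zmod m. star (Poly_Mapping.single (MH a m b1) 1) (\<Sum>b2\<in>Zmod n. Poly_Mapping.single (MH a n b2) 1))"
    by (simp add: star_sum_right finite_Zmod)
  also have "\<dots> = star (\<Sum>b1\<in>Zmod m. Poly_Mapping.single (MH a m b1) 1) (\<Sum>b2\<in>Zmod n. Poly_Mapping.single (MH a n b2) 1)"
    by (simp add: star_sum_left finite_Zmod)
  also have "\<dots> = star (CC_Hol a m) (CC_Hol a n)" using CC_Hol_MH[OF m] CC_Hol_MH[OF n] by simp
  finally show ?thesis .
qed



lemma coprime_by_primes:
  fixes u M :: nat
  assumes "\<And>q. prime q \<Longrightarrow> q dvd u \<Longrightarrow> q dvd M \<Longrightarrow> False"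
  shows "coprime u M"
proof (rule ccontr)
  assume "\<not> coprime u M"
  hence "gcd u M \<noteq> 1" by (metis coprime_iff_gcd_eq_1)
  then obtain q where "prime q" "q dvd gcd u M" using prime_factor_nat by blast
  hence "q dvd u" "q dvd M" by (auto intro: dvd_trans)
  thus False using assms \<open>prime q\<close> by blast
qed

lemma adjust_coprime:
  fixes u0 d M :: nat
  assumes "coprime u0 d" "M > 0"
  shows "\<exists>u. [u = u0] (mod d) \<and> coprime u M"
proof -
  define Q where "Q = {q \<in> prime_factors M. \<not> q dvd u0}"
  define t where "t = \<Prod>Q"
  have fQ: "finite Q" unfolding Q_def by simp
  define u where "u = u0 + d * t"
  have "[u = u0] (mod d)" unfolding u_def by (simp add: cong_def)
  moreover have "coprime u M"
  proof (rule coprime_by_primes)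
    fix q :: nat assume q: "prime q" "q dvd u" "q dvd M"
    have tq: "q dvd t \<longleftrightarrow> q \<in> Q"
    proof
      assume "q dvd t"
      then obtain q' where "q' \<in> Q" "q dvd q'" unfolding t_def using prime_dvd_prod_iff[OF fQ q(1), of id] by auto
      moreover have "prime q'" using \<open>q' \<in> Q\<close> unfolding Q_def by auto
      ultimately show "q \<in> Q" using q(1) by (metis primes_dvd_imp_eq)
    next
      assume "q \<in> Q" thus "q dvd t" unfolding t_def using dvd_prodI[OF fQ, of q "\<lambda>x. x"] by simp
    qed
    show False
    proof (cases "q dvd u0")
      case True
      hence "\<not> q dvd d" using assms(1) q(1) by (metis coprime_common_divisor not_prime_unit)
      moreover have "q dvd d * t" using True q(2) unfolding u_def by (simp add: dvd_add_right_iff)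
      ultimately have "q dvd t" using q(1) by (simp add: prime_dvd_mult_iff)
      hence "q \<in> Q" using tq by simp
      thus False using True unfolding Q_def by simp
    next
      case False
      hence "q \<in> Q" unfolding Q_def using q assms(2) by (simp add: in_prime_factors_iff)
      hence "q dvd d * t" using tq by simp
      hence "q dvd u0" using q(2) unfolding u_def by (simp add: dvd_add_left_iff)
      thus False using False by simp
    qed
  qed
  ultimately show ?thesis by blast
qed

lemma ord_int_divides:
  assumes "n > 0"
  shows "[a ^ d = 1] (mod int n) \<longleftrightarrow> ord_int n a dvd d"
proof -
  define x where "x = nat (a mod int n)"
  have x: "int x = a mod int n" unfolding x_def using assms by simp
  have "[a ^ d = 1] (mod int n) \<longleftrightarrow> [(a mod int n) ^ d = 1] (mod int n)"
    by (simp add: cong_def power_mod)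
  also have "\<dots> \<longleftrightarrow> [int (x ^ d) = int 1] (mod int n)" using x by simp
  also have "\<dots> \<longleftrightarrow> [x ^ d = 1] (mod n)" by (rule cong_int_iff)
  also have "\<dots> \<longleftrightarrow> ord n x dvd d" by (rule ord_divides)
  finally show ?thesis unfolding ord_int_def x_def .
qed

lemma S_coprime:
  fixes a :: int and u :: nat
  assumes p: "prime p" and k: "k \<ge> 1" and ap: "coprime a (int p)" and up: "coprime u p"
    and uo: "coprime u (ord_int (p ^ k) a)"
  shows "coprime (\<Sum>i<u. a ^ i) (int (p ^ k))"
proof -
  define S where "S = (\<Sum>i<u. a ^ i)"
  have pp: "prime (int p)" using p by simp
  have "coprime S (int p)"
  proof (rule ccontr)
    assume "\<not> coprime S (int p)"
    hence dS: "int p dvd S" using pp prime_imp_coprime[of "int p" S] by (metis coprime_commute)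
    show False
    proof (cases "[a = 1] (mod int p)")
      case True
      have "[S = (\<Sum>i<u. 1)] (mod int p)" unfolding S_def
        by (intro cong_sum) (metis True cong_pow power_one)
      hence "[S = int u] (mod int p)" by simp
      hence "int p dvd int u" using dS by (metis cong_dvd_iff)
      hence "p dvd u" by simp
      thus False using up p by (metis coprime_common_divisor dvd_refl not_prime_unit)
    next
      case False
      have "a ^ u - 1 = (a - 1) * S" unfolding S_def by (rule power_diff_1_eq)
      hence "int p dvd a ^ u - 1" using dS by simp
      hence "[a ^ u = 1] (mod int p)" by (simp add: cong_iff_dvd_diff)
      hence d1: "ord_int p a dvd u" using ord_int_divides[of p a u] p by (simp add: prime_gt_0_nat)
      have pk: "0 < p ^ k" using p by (simp add: prime_gt_0_nat)
      have "[a ^ ord_int (p ^ k) a = 1] (mod int (p ^ k))"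
        using ord_int_divides[OF pk, of a "ord_int (p ^ k) a"] by simp
      moreover have "int p dvd int (p ^ k)" using k by (simp add: dvd_power)
      ultimately have "[a ^ ord_int (p ^ k) a = 1] (mod int p)" by (rule cong_dvd_modulus)
      hence d2: "ord_int p a dvd ord_int (p ^ k) a" using ord_int_divides[of p a] p by (simp add: prime_gt_0_nat)
      have "ord_int p a = 1" using coprime_common_divisor[OF uo d1 d2] by simp
      hence "[a ^ 1 = 1] (mod int p)" using ord_int_divides[of p a 1] p by (simp add: prime_gt_0_nat)
      thus False using False by simp
    qed
  qed
  thus ?thesis unfolding S_def by (simp add: coprime_power_right_iff)
qed



lemma cyclic_pow:
  fixes n g i j :: nat
  assumes n: "n > 1" and g: "coprime n g" and o: "ord n (g ^ i) = ord n (g ^ j)"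
  shows "\<exists>u. coprime u (ord n (g ^ i)) \<and> [g ^ j = (g ^ i) ^ u] (mod n)"
proof -
  define N where "N = ord n g"
  have N0: "N > 0" unfolding N_def using g by simp
  define c where "c = gcd i N"
  define c' where "c' = gcd j N"
  have oi: "ord n (g ^ i) = N div c" unfolding N_def c_def using ord_power[OF g] by simp
  have oj: "ord n (g ^ j) = N div c'" unfolding N_def c'_def using ord_power[OF g] by simp
  have c0: "c > 0" "c' > 0" unfolding c_def c'_def using N0 by simp_all
  have cN: "c dvd N" "c' dvd N" unfolding c_def c'_def by simp_all
  define N' where "N' = N div c"
  have NN: "N = c * N'" unfolding N'_def using cN by simp
  have N'0: "N' > 0" using NN N0 by (metis mult_0_right gr0I)
  have "N = c' * N'" using o oi oj cN unfolding N'_def by simp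
  hence cc: "c' = c" using NN N'0 by simp
  define i' where "i' = i div c"
  define j' where "j' = j div c"
  have ii: "i = c * i'" unfolding i'_def c_def by simp
  have "c dvd j" using cc unfolding c'_def by (metis gcd_dvd1)
  hence jj: "j = c * j'" unfolding j'_def by simp
  have ci: "coprime i' N'" unfolding i'_def N'_def c_def using div_gcd_coprime[of i N] N0 by simp
  have cj: "coprime j' N'" unfolding j'_def N'_def using cc div_gcd_coprime[of j N] N0 unfolding c'_def by simp
  obtain v where v: "[i' * v = Suc 0] (mod N')" using cong_solve_coprime_nat[OF ci] by blast
  have cv: "coprime v N'"
  proof (rule coprimeI)
    fix q assume "q dvd v" "q dvd N'"
    hence "q dvd i' * v" by simp
    moreover have "[i' * v mod N' = 1 mod N'] (mod N')" using v by (simp add: cong_def)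
    hence "q dvd 1" using \<open>q dvd N'\<close> \<open>q dvd i' * v\<close> v
      by (metis One_nat_def cong_dvd_iff cong_dvd_modulus_nat)
    thus "is_unit q" by simp
  qed
  define u where "u = j' * v"
  have cu: "coprime u N'" unfolding u_def using cj cv by simp
  have "[i' * v * j' = 1 * j'] (mod N')" using v by (intro cong_mult cong_refl) simp
  hence "(i' * v * j') mod N' = j' mod N'" unfolding cong_def by simp
  hence "(c * (i' * v * j')) mod (c * N') = (c * j') mod (c * N')" by (simp add: mod_mult_mult1)
  hence "[i * u = j] (mod N)" unfolding cong_def NN ii jj u_def by (simp add: ac_simps)
  hence "[g ^ (i * u) = g ^ j] (mod n)" using order_divides_expdiff[OF g] unfolding N_def by simp
  hence "[g ^ j = (g ^ i) ^ u] (mod n)" by (simp add: power_mult cong_sym)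
  moreover have "coprime u (ord n (g ^ i))" using cu oi unfolding N'_def by simp
  ultimately show ?thesis by blast
qed

lemma pow_cong_ord_int:
  fixes a :: int
  assumes "n > 0" "coprime a (int n)" "[u = v] (mod ord_int n a)"
  shows "[a ^ u = a ^ v] (mod int n)"
proof -
  define x where "x = nat (a mod int n)"
  have x: "int x = a mod int n" unfolding x_def using assms by simp
  have "coprime (a mod int n) (int n)" using assms coprime_mod_left_iff[of "int n" a] by simp
  hence cx: "coprime n x" using x by (metis coprime_commute coprime_int_iff)
  have "[x ^ u = x ^ v] (mod n)" using order_divides_expdiff[OF cx] assms(3) unfolding ord_int_def x_def by simp
  hence "[int (x ^ u) = int (x ^ v)] (mod int n)" by (subst cong_int_iff)
  hence "[(a mod int n) ^ u = (a mod int n) ^ v] (mod int n)" using x by simp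
  thus ?thesis by (simp add: cong_def power_mod)
qed

lemma ord_int_pos: "n > 0 \<Longrightarrow> coprime a (int n) \<Longrightarrow> ord_int n a > 0"
proof -
  assume h: "n > 0" "coprime a (int n)"
  have "coprime (a mod int n) (int n)" using h coprime_mod_left_iff[of "int n" a] by simp
  hence "coprime (int (nat (a mod int n))) (int n)" using h(1) by simp
  hence "coprime n (nat (a mod int n))" by (metis coprime_commute coprime_int_iff)
  thus ?thesis unfolding ord_int_def by simp
qed

lemma odd_case:
  fixes a a' :: int
  assumes p: "prime p" "odd p" and k: "k \<ge> 1" and a: "coprime a (int p)" and a': "coprime a' (int p)"
    and o: "ord_int (p ^ k) a' = ord_int (p ^ k) a"
  shows "\<exists>u. coprime u (ord_int (p ^ k) a) \<and> [a' = a ^ u] (mod int (p ^ k))"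
proof -
  define n where "n = p ^ k"
  have n1: "n > 1" unfolding n_def using prime_gt_1_nat[OF p(1)] k by (intro one_less_power) auto
  obtain g where g: "\<forall>k>0. residue_primroot (p ^ k) g" using residue_primroot_odd_prime_power_exists[OF p] by blast
  have rg: "residue_primroot n g" unfolding n_def using g k by simp
  have cg: "coprime n g" using rg unfolding residue_primroot_def by simp
  have gen: "bij_betw (\<lambda>i. g ^ i mod n) {..<totient n} (totatives n)" by (rule residue_primroot_is_generator[OF n1 rg])
  have rep: "\<exists>i. [nat (b mod int n) = g ^ i] (mod n) \<and> int (nat (b mod int n)) = b mod int n"
    if b: "coprime b (int p)" for b :: int
  proof -
    define x where "x = nat (b mod int n)"
    have x: "int x = b mod int n" unfolding x_def using n1 by simp
    have "coprime b (int n)" using b unfolding n_def by simp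
    hence "coprime (b mod int n) (int n)" using n1 coprime_mod_left_iff[of "int n" b] by simp
    hence cx: "coprime x n" using x by (metis coprime_int_iff)
    have "x \<noteq> 0" proof assume "x = 0" thus False using cx n1 by simp qed
    moreover have "x < n" using x n1 by (metis of_nat_less_iff pos_mod_bound of_nat_0_less_iff order.strict_trans zero_less_one)
    ultimately have "x \<in> totatives n" using cx unfolding totatives_def by simp
    then obtain i where "x = g ^ i mod n" using gen unfolding bij_betw_def by auto
    hence "[x = g ^ i] (mod n)" by (simp add: cong_def)
    thus ?thesis using x unfolding x_def by blast
  qed
  obtain i where i: "[nat (a mod int n) = g ^ i] (mod n)" "int (nat (a mod int n)) = a mod int n" using rep[OF a] by blast
  obtain j where j: "[nat (a' mod int n) = g ^ j] (mod n)" "int (nat (a' mod int n)) = a' mod int n" using rep[OF a'] by blast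
  have oi: "ord_int n a = ord n (g ^ i)" unfolding ord_int_def using ord_cong[OF i(1)] .
  have oj: "ord_int n a' = ord n (g ^ j)" unfolding ord_int_def using ord_cong[OF j(1)] .
  obtain u where u: "coprime u (ord n (g ^ i))" "[g ^ j = (g ^ i) ^ u] (mod n)"
    using cyclic_pow[OF n1 cg, of i j] o oi oj unfolding n_def by auto
  have "[nat (a' mod int n) = nat (a mod int n) ^ u] (mod n)"
    using j(1) u(2) cong_pow[OF i(1), of u] by (metis cong_sym cong_trans)
  hence "[int (nat (a' mod int n)) = int (nat (a mod int n)) ^ u] (mod int n)"
    by (metis cong_int_iff of_nat_power)
  hence "[a' mod int n = (a mod int n) ^ u] (mod int n)" using i(2) j(2) by simp
  hence "[a' = a ^ u] (mod int n)" by (simp add: cong_def power_mod)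
  thus ?thesis using u(1) oi unfolding n_def by auto
qed



lemma ord_five: assumes "k \<ge> 2" shows "ord (2 ^ k) (5::nat) = 2 ^ (k - 2)"
proof (cases "k = 2")
  case True
  have "[5 = (1::nat)] (mod 4)" by (simp add: cong_def)
  hence "ord 4 (5::nat) = ord 4 (1::nat)" by (rule ord_cong)
  thus ?thesis using True by simp
next
  case False
  hence "k \<ge> 3" using assms by simp
  thus ?thesis by (intro ord_twopow_3_5) auto
qed

lemma two_rep:
  fixes a :: int
  assumes k: "k \<ge> 2" and a: "odd a"
  shows "\<exists>e\<in>{0,1::nat}. \<exists>j::nat. [a = (-1) ^ e * 5 ^ j] (mod int (2 ^ k))"
proof -
  define n :: nat where "n = 2 ^ k"
  define N where "N = ord n 5"
  have NN: "N = 2 ^ (k - 2)" unfolding N_def n_def by (rule ord_five[OF k])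
  have n4: "(4::int) dvd int n" unfolding n_def using k
    by (metis le_imp_power_dvd numeral_Bit0_eq_double of_nat_dvd_iff of_nat_numeral power2_eq_square power_one_right one_plus_numeral semiring_norm(2) numeral_One mult_2 of_nat_power)
  have n2: "(2::int) dvd int n" using n4 by (metis dvd_trans even_numeral)
  have npos: "int n > 0" unfolding n_def by simp
  have c5: "coprime n (5::nat)" unfolding n_def by simp
  define A where "A = (\<lambda>j. (5::int) ^ j mod int n) ` {..<N}"
  define B where "B = (\<lambda>j. (- ((5::int) ^ j)) mod int n) ` {..<N}"
  define Od where "Od = {x \<in> {0..<int n}. x mod 2 = 1}"
  have eqA: "(5::int) ^ j mod int n = int (5 ^ j mod n)" for j by (simp add: of_nat_mod)
  have injA: "inj_on (\<lambda>j. (5::int) ^ j mod int n) {..<N}"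
  proof -
    have "inj_on (\<lambda>j. 5 ^ j mod n) {..<ord n 5}" by (rule inj_power_mod[OF c5])
    thus ?thesis unfolding N_def eqA inj_on_def by simp
  qed
  have injB: "inj_on (\<lambda>j. (- ((5::int) ^ j)) mod int n) {..<N}"
  proof (rule inj_onI)
    fix i j assume h: "i \<in> {..<N}" "j \<in> {..<N}" "(- ((5::int) ^ i)) mod int n = (- ((5::int) ^ j)) mod int n"
    hence "[- ((5::int) ^ i) = - (5 ^ j)] (mod int n)" by (simp add: cong_def)
    hence "[(5::int) ^ i = 5 ^ j] (mod int n)" by (simp add: cong_minus_minus_iff)
    hence "(5::int) ^ i mod int n = 5 ^ j mod int n" by (simp add: cong_def)
    thus "i = j" using injA h(1,2) unfolding inj_on_def by blast
  qed
  have m4A: "x mod 4 = 1" if xA: "x \<in> A" for x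
  proof -
    obtain j where x: "x = (5::int) ^ j mod int n" using xA unfolding A_def by blast
    have "x mod 4 = (5::int) ^ j mod 4" unfolding x using n4 by (simp add: mod_mod_cancel)
    also have "\<dots> = ((5::int) mod 4) ^ j mod 4" by (rule power_mod[symmetric])
    finally show ?thesis by simp
  qed
  have m4B: "x mod 4 = 3" if xB: "x \<in> B" for x
  proof -
    obtain j where x: "x = (- ((5::int) ^ j)) mod int n" using xB unfolding B_def by blast
    have "x mod 4 = (- ((5::int) ^ j)) mod 4" unfolding x using n4 by (simp add: mod_mod_cancel)
    also have "(5::int) ^ j mod 4 = 1"
    proof -
      have "(5::int) ^ j mod 4 = ((5::int) mod 4) ^ j mod 4" by (rule power_mod[symmetric])
      thus ?thesis by simp
    qed
    hence "(- ((5::int) ^ j)) mod 4 = 3" by (simp add: zmod_zminus1_eq_if)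
    finally show ?thesis .
  qed
  have disj: "A \<inter> B = {}" using m4A m4B by fastforce
  have odd2: "x mod 2 = 1" if "x mod 4 = 1 \<or> x mod 4 = 3" for x :: int
    using that by (metis mod_mod_cancel dvd_triv_right numeral_Bit0_eq_double one_mod_two_eq_one numeral_3_eq_3 add_2_eq_Suc' mod_add_self2 one_plus_numeral semiring_norm(3) numeral_One)
  have sub: "A \<union> B \<subseteq> Od"
  proof
    fix x assume "x \<in> A \<union> B"
    hence "x mod 4 = 1 \<or> x mod 4 = 3" using m4A m4B by blast
    hence "x mod 2 = 1" by (rule odd2)
    moreover have "x \<in> {0..<int n}" using \<open>x \<in> A \<union> B\<close> npos unfolding A_def B_def by auto
    ultimately show "x \<in> Od" unfolding Od_def by simp
  qed
  have cardO: "card Od = n div 2"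
  proof -
    have "Od = (\<lambda>i. 2 * i + 1) ` {0..<int (n div 2)}"
    proof (rule equalityI; rule subsetI)
      fix x assume "x \<in> Od"
      hence x: "0 \<le> x" "x < int n" "x mod 2 = 1" unfolding Od_def by auto
      have "x = 2 * (x div 2) + 1" using x(3) by (metis add.commute div_mult_mod_eq mult.commute)
      moreover have "x div 2 < int (n div 2)" using x n2 by (auto simp: zdiv_int[symmetric])
      moreover have "0 \<le> x div 2" using x by simp
      ultimately show "x \<in> (\<lambda>i. 2 * i + 1) ` {0..<int (n div 2)}" by (metis atLeastLessThan_iff imageI)
    next
      fix x assume "x \<in> (\<lambda>i. 2 * i + 1) ` {0..<int (n div 2)}"
      then obtain i where "x = 2 * i + 1" "0 \<le> i" "i < int (n div 2)" by auto
      thus "x \<in> Od" unfolding Od_def using n2 by (auto simp: zdiv_int[symmetric])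
    qed
    moreover have "inj_on (\<lambda>i::int. 2 * i + 1) {0..<int (n div 2)}" by (rule inj_onI) simp
    ultimately show ?thesis by (simp add: card_image)
  qed
  have cA: "card A = N" unfolding A_def using injA by (simp add: card_image)
  have cB: "card B = N" unfolding B_def using injB by (simp add: card_image)
  have "card (A \<union> B) = card A + card B" using disj unfolding A_def B_def by (intro card_Un_disjoint) auto
  also have "\<dots> = 2 * N" using cA cB by simp
  also have "\<dots> = n div 2"
  proof -
    have "k = Suc (Suc (k - 2))" using k by simp
    hence "n = 2 * (2 * 2 ^ (k - 2))" unfolding n_def by (metis power_Suc)
    thus ?thesis unfolding NN by simp
  qed
  finally have "card (A \<union> B) = card Od" using cardO by simp
  moreover have fOd: "finite Od" unfolding Od_def by (rule finite_subset[of _ "{0..<int n}"]) auto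
  ultimately have AB: "A \<union> B = Od" using card_subset_eq[OF fOd sub] by simp
  have "a mod int n mod 2 = a mod 2" using n2 by (rule mod_mod_cancel)
  hence "a mod int n mod 2 = 1" using a by (simp add: odd_iff_mod_2_eq_one)
  hence "a mod int n \<in> Od" unfolding Od_def using npos by simp
  hence "a mod int n \<in> A \<or> a mod int n \<in> B" using AB by blast
  thus ?thesis
  proof
    assume "a mod int n \<in> A"
    then obtain j where "a mod int n = 5 ^ j mod int n" unfolding A_def by auto
    hence "[a = (-1) ^ 0 * 5 ^ j] (mod int (2 ^ k))" unfolding cong_def n_def by simp
    thus ?thesis by blast
  next
    assume "a mod int n \<in> B"
    then obtain j where "a mod int n = (- (5 ^ j)) mod int n" unfolding B_def by auto
    hence "[a = (-1) ^ 1 * 5 ^ j] (mod int (2 ^ k))" unfolding cong_def n_def by simp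
    thus ?thesis by blast
  qed
qed



lemma oinv2_spec:
  fixes a :: int
  assumes k: "k \<ge> 2" and a: "odd a"
  shows "\<exists>e j. e \<in> {0, 1} \<and> [a = (-1) ^ e * 5 ^ j] (mod int (2 ^ k)) \<and> oinv 2 k a = (e, ord_int (2 ^ k) (5 ^ j))"
proof -
  define P where "P = (\<lambda>(e::nat, d::nat). e \<in> {0, 1} \<and>
             (\<exists>j::nat. [a = (-1) ^ e * 5 ^ j] (mod int (2 ^ k)) \<and> d = ord_int (2 ^ k) (5 ^ j)))"
  have o: "oinv 2 k a = (SOME x. P x)" unfolding oinv_def P_def using k by simp
  obtain e j where "e \<in> {0, 1::nat}" "[a = (-1) ^ e * 5 ^ j] (mod int (2 ^ k))" using two_rep[OF k a] by blast
  hence "P (e, ord_int (2 ^ k) (5 ^ j))" unfolding P_def by blast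
  hence "P (SOME x. P x)" by (rule someI)
  then obtain e' d' where ed: "(SOME x. P x) = (e', d')" "P (e', d')" by (metis surj_pair)
  then obtain j' where "e' \<in> {0, 1}" "[a = (-1) ^ e' * 5 ^ j'] (mod int (2 ^ k))" "d' = ord_int (2 ^ k) (5 ^ j')"
    unfolding P_def by auto
  thus ?thesis using o ed(1) by auto
qed

lemma ord_int_of_nat: "n > 0 \<Longrightarrow> ord_int n (int x) = ord n x"
  unfolding ord_int_def by (simp add: of_nat_mod[symmetric] del: of_nat_mod)

lemma key2:
  fixes a a' :: int
  assumes k: "k \<ge> 2" and a: "odd a" and a': "odd a'" and o: "oinv 2 k a' = oinv 2 k a"
  shows "\<exists>u. coprime u (fact (2 ^ k)) \<and> coprime u (ord_int (2 ^ k) a) \<and> [a' = a ^ u] (mod int (2 ^ k))"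
proof -
  define n :: nat where "n = 2 ^ k"
  have n1: "n > 1" unfolding n_def using k by (intro one_less_power) auto
  obtain e j where ej: "e \<in> {0, 1}" "[a = (-1) ^ e * 5 ^ j] (mod int n)" "oinv 2 k a = (e, ord_int n (5 ^ j))"
    using oinv2_spec[OF k a] unfolding n_def by blast
  obtain e' j' where ej': "e' \<in> {0, 1}" "[a' = (-1) ^ e' * 5 ^ j'] (mod int n)" "oinv 2 k a' = (e', ord_int n (5 ^ j'))"
    using oinv2_spec[OF k a'] unfolding n_def by blast
  have ee: "e' = e" and oo: "ord_int n (5 ^ j') = ord_int n (5 ^ j)" using o ej(3) ej'(3) by auto
  have oo': "ord n (5 ^ j) = ord n (5 ^ j')"
    using oo ord_int_of_nat[of n "5 ^ j"] ord_int_of_nat[of n "5 ^ j'"] n1 by simp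
  have c5: "coprime n (5::nat)" unfolding n_def by simp
  obtain u0 where u0: "coprime u0 (ord n (5 ^ j))" "[5 ^ j' = (5 ^ j) ^ u0] (mod n)"
    using cyclic_pow[OF n1 c5 oo'] by blast
  define M where "M = 2 * fact n * ord_int n a"
  have cop_a: "coprime a (int n)" unfolding n_def using a by simp
  have M0: "M > 0" unfolding M_def using ord_int_pos[of n a] n1 cop_a by simp
  obtain u where u: "[u = u0] (mod ord n (5 ^ j))" "coprime u M" using adjust_coprime[OF u0(1) M0] by blast
  have c5j: "coprime n (5 ^ j)" using c5 by simp
  have "[(5 ^ j) ^ u = (5 ^ j) ^ u0] (mod n)" using order_divides_expdiff[OF c5j] u(1) by (simp add: power_mult[symmetric])
  hence "[(5::nat) ^ j' = (5 ^ j) ^ u] (mod n)" using u0(2) by (metis cong_sym cong_trans)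
  hence five: "[(5::int) ^ j' = (5 ^ j) ^ u] (mod int n)" by (metis cong_int_iff of_nat_numeral of_nat_power)
  have "coprime u 2" using u(2) unfolding M_def by simp
  hence uodd: "odd u" by (metis coprime_right_2_iff_odd)
  have sgn: "((-1::int) ^ e) ^ u = (-1) ^ e" using ej(1) uodd by auto
  have "[a ^ u = ((-1) ^ e * 5 ^ j) ^ u] (mod int n)" using ej(2) by (rule cong_pow)
  also have "((-1::int) ^ e * 5 ^ j) ^ u = (-1) ^ e * (5 ^ j) ^ u" by (simp add: power_mult_distrib sgn)
  also have "[(-1::int) ^ e * (5 ^ j) ^ u = (-1) ^ e * 5 ^ j'] (mod int n)"
    using five by (intro cong_mult cong_refl) (rule cong_sym)
  also have "[(-1::int) ^ e * 5 ^ j' = a'] (mod int n)" using ej'(2) ee by (simp add: cong_sym)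
  finally have "[a' = a ^ u] (mod int n)" by (rule cong_sym)
  moreover have "coprime u (fact n)" "coprime u (ord_int n a)" using u(2) unfolding M_def by simp_all
  ultimately show ?thesis unfolding n_def by blast
qed

lemma key_odd:
  fixes a a' :: int
  assumes p: "prime p" "odd p" and k: "k \<ge> 1" and a: "coprime a (int p)" and a': "coprime a' (int p)"
    and o: "ord_int (p ^ k) a' = ord_int (p ^ k) a"
  shows "\<exists>u. coprime u (fact (p ^ k)) \<and> coprime u (ord_int (p ^ k) a) \<and> [a' = a ^ u] (mod int (p ^ k))"
proof -
  define n where "n = p ^ k"
  have n0: "n > 0" unfolding n_def using p by (simp add: prime_gt_0_nat)
  obtain u0 where u0: "coprime u0 (ord_int n a)" "[a' = a ^ u0] (mod int n)"
    using odd_case[OF p k a a' o] unfolding n_def by blast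
  define M where "M = fact n * ord_int n a"
  have cop_a: "coprime a (int n)" unfolding n_def using a by simp
  have M0: "M > 0" unfolding M_def using ord_int_pos[OF n0 cop_a] by simp
  obtain u where u: "[u = u0] (mod ord_int n a)" "coprime u M" using adjust_coprime[OF u0(1) M0] by blast
  have "[a ^ u = a ^ u0] (mod int n)" by (rule pow_cong_ord_int[OF n0 cop_a u(1)])
  hence "[a' = a ^ u] (mod int n)" using u0(2) by (metis cong_sym cong_trans)
  moreover have "coprime u (fact n)" "coprime u (ord_int n a)" using u(2) unfolding M_def by simp_all
  ultimately show ?thesis unfolding n_def by blast
qed

lemma key:
  fixes a a' :: int
  assumes p: "prime p" and k: "k \<ge> 1" and a: "coprime a (int p)" and a': "coprime a' (int p)"
    and o: "oinv p k a' = oinv p k a"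
  shows "\<exists>u. coprime u (fact (p ^ k)) \<and> coprime u (ord_int (p ^ k) a) \<and> [a' = a ^ u] (mod int (p ^ k))"
proof (cases "p > 2")
  case True
  hence "odd p" using p by (metis prime_odd_nat)
  moreover have "ord_int (p ^ k) a' = ord_int (p ^ k) a" using o True unfolding oinv_def by simp
  ultimately show ?thesis using key_odd[OF p(1) _ k a a'] by blast
next
  case False
  hence p2: "p = 2" using prime_ge_2_nat[OF p] by simp
  have ao: "odd a" "odd a'" using a a' p2 by auto
  show ?thesis
  proof (cases "k \<ge> 2")
    case True thus ?thesis using key2[OF True ao(1) ao(2)] o p2 by simp
  next
    case False
    hence k1: "k = 1" using k by simp
    have "[a' = a ^ 1] (mod int 2)" using ao by (simp add: cong_def odd_iff_mod_2_eq_one)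
    thus ?thesis using p2 k1 by (intro exI[of _ 1]) simp
  qed
qed

lemma Gamma_eq:
  fixes a :: int
  assumes p: "prime p" and k: "k \<ge> 1" and a: "coprime a (int p)"
  shows "Gamma p k (oinv p k a) = CC_Hol a (p ^ k)"
proof -
  define a' where "a' = (SOME a'. \<not> int p dvd a' \<and> oinv p k a' = oinv p k a)"
  have pp: "prime (int p)" using p by simp
  have "\<not> int p dvd a" using a pp by (metis coprime_commute not_prime_unit coprime_common_divisor dvd_refl)
  hence "\<not> int p dvd a \<and> oinv p k a = oinv p k a" by simp
  hence "\<not> int p dvd a' \<and> oinv p k a' = oinv p k a" unfolding a'_def by (rule someI)
  hence a'1: "\<not> int p dvd a'" and a'2: "oinv p k a' = oinv p k a" by auto
  have ca': "coprime a' (int p)" using a'1 pp prime_imp_coprime[of "int p" a'] by (simp add: coprime_commute)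
  obtain u where u: "coprime u (fact (p ^ k))" "coprime u (ord_int (p ^ k) a)" "[a' = a ^ u] (mod int (p ^ k))"
    using key[OF p k a ca' a'2] by blast
  have n1: "p ^ k \<ge> 1" using p by (simp add: prime_gt_0_nat Suc_leI)
  have "p dvd fact (p ^ k)" using p k by (intro dvd_fact) (simp_all add: prime_gt_0_nat Suc_leI self_le_power)
  hence up: "coprime u p" using u(1) by (metis coprime_commute coprime_divisors dvd_refl)
  have s: "coprime (\<Sum>i<u. a ^ i) (int (p ^ k))" by (rule S_coprime[OF p k a up u(2)])
  have ca: "coprime a (int (p ^ k))" using a by simp
  have "CC_Hol a' (p ^ k) = CC_Hol a (p ^ k)" by (rule lemmaA[OF n1 ca u(1) s u(3)])
  thus ?thesis unfolding Gamma_def a'_def .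
qed



lemma CC_Hol_1: "CC_Hol a 1 = x1"
proof -
  have Z: "Zmod 1 = {0}" unfolding Zmod_def by auto
  have g: "H a 1 0 = (\<lambda>x. 0)" unfolding H_def by auto
  have it: "((\<lambda>x::int. 0::int) ^^ n) 0 = 0" for n by (induction n) auto
  have orb: "orbit_of (\<lambda>x::int. 0::int) 0 = {0}" unfolding orbit_of_def using it by auto
  have nc: "num_cycles (\<lambda>x::int. 0::int) {0} = (\<lambda>i. if i = 1 then 1 else 0)"
  proof
    fix i
    have cy: "cycles_on (\<lambda>x::int. 0::int) {0} = {{0}}" unfolding cycles_on_def using orb by simp
    have "{c \<in> cycles_on (\<lambda>x::int. 0::int) {0}. card c = i} = (if i = 1 then {{0}} else {})"
      unfolding cy by auto
    thus "num_cycles (\<lambda>x::int. 0::int) {0} i = (if i = 1 then 1 else 0)" unfolding num_cycles_def by simp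
  qed
  have "Abs_poly_mapping (\<lambda>i::nat. if i = 1 then 1 else (0::nat)) = Poly_Mapping.single 1 1"
  proof (rule poly_mapping_eqI)
    fix i
    have "finite {i::nat. (if i = 1 then 1 else (0::nat)) \<noteq> 0}" by simp
    thus "Poly_Mapping.lookup (Abs_poly_mapping (\<lambda>i::nat. if i = 1 then 1 else (0::nat))) i =
          Poly_Mapping.lookup (Poly_Mapping.single 1 1) i" by (simp add: lookup_single when_def)
  qed
  hence "MH a 1 0 = Poly_Mapping.single 1 1" unfolding MH_def Z g nc .
  moreover have "CC_Hol a 1 = Poly_Mapping.single (MH a 1 0) 1" using CC_Hol_MH[of 1 a] Z by simp
  ultimately show ?thesis unfolding x1_def monomial_poly_def by simp
qed

lemma star_prod_cong:
  assumes "finite A" "\<And>p. p \<in> A \<Longrightarrow> f p = g p"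
  shows "star_prod f A = star_prod g A"
proof -
  have "\<forall>p\<in>set xs. f p = g p \<Longrightarrow> foldr (\<lambda>p acc. star (f p) acc) xs x1 = foldr (\<lambda>p acc. star (g p) acc) xs x1" for xs
    by (induction xs) auto
  thus ?thesis unfolding star_prod_def using assms by simp
qed

lemma star_prod_Min:
  assumes "finite A" "A \<noteq> {}"
  shows "star_prod f A = star (f (Min A)) (star_prod f (A - {Min A}))"
  unfolding star_prod_def using sorted_list_of_set_nonempty[OF assms] by simp

lemma main:
  fixes a :: int
  shows "m \<ge> 1 \<Longrightarrow> coprime a (int m) \<Longrightarrow>
    CC_Hol a m = star_prod (\<lambda>p. CC_Hol a (p ^ multiplicity p m)) (prime_factors m)"
proof (induction m rule: less_induct)
  case (less m)
  show ?case
  proof (cases "m = 1")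
    case True
    thus ?thesis using CC_Hol_1 unfolding star_prod_def by simp
  next
    case False
    hence m1: "m > 1" using less.prems by simp
    define A where "A = prime_factors m"
    have fA: "finite A" unfolding A_def by simp
    have Ane: "A \<noteq> {}"
    proof -
      obtain q where q: "prime q" "q dvd m" using prime_factor_nat[of m] m1 by auto
      hence "q \<in> A" unfolding A_def using m1 by (simp add: in_prime_factors_iff)
      thus ?thesis by auto
    qed
    define p where "p = Min A"
    have pA: "p \<in> A" unfolding p_def using fA Ane by simp
    have pp: "prime p" and pm: "p dvd m" using pA unfolding A_def by auto
    define k where "k = multiplicity p m"
    have m0: "m \<noteq> 0" using m1 by simp
    have k1: "k \<ge> 1" unfolding k_def using prime_multiplicity_gt_zero_iff[of p m] pp m0 pm by simp
    define m' where "m' = m div p ^ k"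
    have mm: "m = p ^ k * m'" unfolding m'_def k_def by (simp add: multiplicity_dvd)
    have ndvd: "\<not> p dvd m'" unfolding m'_def k_def using multiplicity_decompose[OF m0, of p] pp by (metis not_prime_unit)
    have m'0: "m' \<noteq> 0" using mm m0 by auto
    have pk0: "p ^ k \<noteq> 0" using pp by simp
    have "coprime p m'" by (rule prime_imp_coprime[OF pp ndvd])
    hence cop: "coprime (p ^ k) m'" by (metis coprime_power_left_iff)
    have "p \<le> p ^ k" using k1 prime_gt_0_nat[OF pp] by (intro self_le_power) auto
    hence pk2: "p ^ k \<ge> 2" using prime_ge_2_nat[OF pp] by linarith
    have "1 * m' < p ^ k * m'" using pk2 m'0 by (intro mult_strict_right_mono) auto
    hence lt: "m' < m" using mm by simp
    have ca': "coprime a (int m')" using less.prems(2) mm by simp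
    have pf': "prime_factors m' = A - {p}"
    proof -
      have "A = prime_factors (p ^ k) \<union> prime_factors m'" unfolding A_def using mm prime_factors_product[OF pk0 m'0] by simp
      also have "prime_factors (p ^ k) = {p}" using k1 pp prime_factors_power[of k p] by (simp add: prime_prime_factors)
      finally show ?thesis using ndvd by auto
    qed
    have mult: "multiplicity q m = multiplicity q m'" if "q \<in> A - {p}" for q
    proof -
      have qp: "prime q" "q \<noteq> p" using that unfolding A_def by auto
      have "multiplicity q m = multiplicity q (p ^ k) + multiplicity q m'"
        unfolding mm by (rule prime_elem_multiplicity_mult_distrib) (use qp pk0 m'0 in auto)
      thus ?thesis using multiplicity_distinct_prime_power[OF qp(1) pp qp(2)] by simp
    qed
    have IH: "CC_Hol a m' = star_prod (\<lambda>q. CC_Hol a (q ^ multiplicity q m')) (prime_factors m')"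
      using less.IH[OF lt _ ca'] m'0 by simp
    have "CC_Hol a m = star (CC_Hol a (p ^ k)) (CC_Hol a m')"
      unfolding mm using CC_Hol_mult[of "p ^ k" m' a] pk0 m'0 cop less.prems(2) mm
      by (simp add: Suc_leI)
    also have "CC_Hol a m' = star_prod (\<lambda>q. CC_Hol a (q ^ multiplicity q m)) (A - {p})"
      unfolding IH pf' using fA mult by (intro star_prod_cong) auto
    also have "star (CC_Hol a (p ^ k)) \<dots> = star_prod (\<lambda>q. CC_Hol a (q ^ multiplicity q m)) A"
      using star_prod_Min[OF fA Ane] unfolding p_def k_def by simp
    finally show ?thesis unfolding A_def .
  qed
qed

theorem proposition6p11:
  fixes m :: nat and a :: int
  assumes "m \<ge> 1" and "coprime a (int m)"
  shows "CC_Hol a m =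
    star_prod (\<lambda>p. Gamma p (multiplicity p m) (oinv p (multiplicity p m) a))
              (prime_factors m)"
proof -
  have "star_prod (\<lambda>p. Gamma p (multiplicity p m) (oinv p (multiplicity p m) a)) (prime_factors m)
      = star_prod (\<lambda>p. CC_Hol a (p ^ multiplicity p m)) (prime_factors m)"
  proof (rule star_prod_cong)
    fix p assume p: "p \<in> prime_factors m"
    have pp: "prime p" and pm: "p dvd m" using p by auto
    have "multiplicity p m \<ge> 1" using prime_multiplicity_gt_zero_iff[of p m] pp pm assms(1) by simp
    moreover have "coprime a (int p)" using assms(2) pm by (meson coprime_divisors dvd_refl of_nat_dvd_iff)
    ultimately show "Gamma p (multiplicity p m) (oinv p (multiplicity p m) a) = CC_Hol a (p ^ multiplicity p m)"
      by (rule Gamma_eq[OF pp])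
  qed simp
  thus ?thesis using main[OF assms] by simp
qed


end
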